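(* Let $N$ be a prime and $m$ a positive integer prime to $N$ with $m<N^2/4$. Then every non-cuspidal point in the support of the divisor $i_{\{1,2\}}^*\widetilde{C}_m$ on $X_{\mathrm{ns}}(N)$ is a Heegner point in the sense of Kohen--Pacetti.
   Context: Fix a non-square $\varepsilon\in\mathbb{F}_N$. Non-cuspidal points of $X_{\mathrm{ns}}(N)$ correspond to isomorphism classes of pairs $(E,\phi_\varepsilon)$ with $E$ an elliptic curve and $\phi_\varepsilon$ an endomorphism of $E[N]$ with $\phi_\varepsilon^2=\varepsilon$; $(E,\phi)\cong(E',\phi')$ if there is an isomorphism $\psi:E\to E'$ with $\psi\circ\phi=\phi'\circ\psi$ on $E[N]$. For $m$ prime to $N$, $X_{\mathrm{ns}}(N,m)$ parametrises triples $(E,\phi_\varepsilon,C)$ with $C\subset E$ cyclic of order $m$; the Hecke correspondence $\widetilde{C}_m\subset X_{\mathrm{ns}}(N)\times X_{\mathrm{ns}}(N)$ is the image of $X_{\mathrm{ns}}(N,m)$ under $(E,\phi_\varepsilon,C)\mapsto\big((E,\phi_\varepsilon),(E/C,\overline{\pi_C}\phi_\varepsilon\overline{\pi_C}^{-1})\big)$, with $\pi_C:E\to E/C$ and $\overline{\pi_C}$ its restriction to $E[N]$. $i_{\{1,2\}}$ is the diagonal embedding. $(E,\phi_\varepsilon)$ is a Heegner point (Kohen--Pacetti) if $\mathrm{End}(E)$ is an order of conductor prime to $N$ in an imaginary quadratic field and $\phi_\varepsilon$ is induced by an endomorphism of $E$. *)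

theory Defs
  imports Complex_Main "HOL-Computational_Algebra.Polynomial" "HOL-Number_Theory.Number_Theory"
begin

text \<open>Complex-analytic model: an elliptic curve over the complex numbers is C/L for a
lattice L; E[N] is (1/N)L/L; endomorphisms of E are multiplications by a with aL in L.\<close>

definition lattice_gen :: "complex \<Rightarrow> complex \<Rightarrow> complex set" where
  "lattice_gen w1 w2 = {of_int a * w1 + of_int b * w2 | a b. True}"

definition is_lattice :: "complex set \<Rightarrow> bool" where
  "is_lattice L \<longleftrightarrow> (\<exists>w1 w2. Im (w2 / w1) \<noteq> 0 \<and> L = lattice_gen w1 w2)"

text \<open>Representatives (in C) of the N-torsion points of C/L.\<close>
definition torsion :: "nat \<Rightarrow> complex set \<Rightarrow> complex set" where
  "torsion n L = {x. of_nat n * x \<in> L}"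

text \<open>A group endomorphism of E[n], given on representatives and well defined modulo L.\<close>
definition is_tors_endo :: "nat \<Rightarrow> complex set \<Rightarrow> (complex \<Rightarrow> complex) \<Rightarrow> bool" where
  "is_tors_endo n L f \<longleftrightarrow>
     (\<forall>x\<in>torsion n L. f x \<in> torsion n L) \<and>
     (\<forall>x\<in>torsion n L. \<forall>y\<in>torsion n L. x - y \<in> L \<longrightarrow> f x - f y \<in> L) \<and>
     (\<forall>x\<in>torsion n L. \<forall>y\<in>torsion n L. f (x + y) - f x - f y \<in> L)"

text \<open>Non-cuspidal point (E, phi_eps) of X_ns(N): phi_eps^2 = eps on E[N].\<close>
definition ns_structure :: "nat \<Rightarrow> int \<Rightarrow> complex set \<Rightarrow> (complex \<Rightarrow> complex) \<Rightarrow> bool" where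
  "ns_structure n eps L f \<longleftrightarrow> is_lattice L \<and> is_tors_endo n L f \<and>
     (\<forall>x\<in>torsion n L. f (f x) - of_int eps * x \<in> L)"

text \<open>Isomorphism of pairs: psi = multiplication by c, C/L -> C/L', with psi o phi = phi' o psi on E[N].\<close>
definition ns_iso :: "nat \<Rightarrow> complex set \<Rightarrow> (complex \<Rightarrow> complex) \<Rightarrow> complex set \<Rightarrow> (complex \<Rightarrow> complex) \<Rightarrow> bool" where
  "ns_iso n L f L' f' \<longleftrightarrow> (\<exists>c. c \<noteq> 0 \<and> (\<lambda>z. c * z) ` L = L' \<and>
     (\<forall>x\<in>torsion n L. c * f x - f' (c * x) \<in> L'))"

text \<open>L' is the lattice with C/L' = E/C for a cyclic subgroup C = <z mod L> of order m of E = C/L;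
  the projection pi_C is induced by the identity of C.\<close>
definition cyclic_quotient :: "nat \<Rightarrow> complex set \<Rightarrow> complex set \<Rightarrow> bool" where
  "cyclic_quotient m L L' \<longleftrightarrow> (\<exists>z. of_nat m * z \<in> L \<and>
     (\<forall>k::nat. 0 < k \<and> k < m \<longrightarrow> of_nat k * z \<notin> L) \<and>
     L' = {of_int k * z + l | k l. l \<in> L})"

text \<open>(x, y) lies in the Hecke correspondence C_m: there is (E, phi, C) with (E, phi) = x and
  (E/C, pi phi pi^-1) = y up to isomorphism; pi phi pi^-1 is characterised by phi' o pi = pi o phi
  on E[N].\<close>
definition hecke_corr :: "nat \<Rightarrow> int \<Rightarrow> nat \<Rightarrow> complex set \<Rightarrow> (complex \<Rightarrow> complex)
    \<Rightarrow> complex set \<Rightarrow> (complex \<Rightarrow> complex) \<Rightarrow> bool" where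
  "hecke_corr N eps m L1 f1 L2 f2 \<longleftrightarrow> (\<exists>L f L' f'. ns_structure N eps L f \<and> ns_iso N L f L1 f1 \<and>
     cyclic_quotient m L L' \<and> is_tors_endo N L' f' \<and>
     (\<forall>x\<in>torsion N L. f' x - f x \<in> L') \<and> ns_iso N L' f' L2 f2)"

definition End_ring :: "complex set \<Rightarrow> complex set" where
  "End_ring L = {a. (\<lambda>z. a * z) ` L \<subseteq> L}"

definition alg_int :: "complex \<Rightarrow> bool" where
  "alg_int z \<longleftrightarrow> (\<exists>p :: int poly. lead_coeff p = 1 \<and> poly (map_poly of_int p) z = 0)"

definition quad_field :: "complex \<Rightarrow> complex set" where
  "quad_field \<tau> = {of_rat a + of_rat b * \<tau> | a b. True}"

definition imag_quad :: "complex \<Rightarrow> bool" where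
  "imag_quad \<tau> \<longleftrightarrow> Im \<tau> \<noteq> 0 \<and> \<tau>\<^sup>2 \<in> quad_field \<tau>"

definition ring_of_integers :: "complex set \<Rightarrow> complex set" where
  "ring_of_integers K = {z \<in> K. alg_int z}"

definition is_order :: "complex set \<Rightarrow> complex set \<Rightarrow> bool" where
  "is_order R K \<longleftrightarrow> R \<subseteq> ring_of_integers K \<and> 1 \<in> R \<and> is_lattice R \<and>
     (\<forall>x\<in>R. \<forall>y\<in>R. x + y \<in> R \<and> x - y \<in> R \<and> x * y \<in> R)"

text \<open>Conductor = index [O_K : O].\<close>
definition conductor :: "complex set \<Rightarrow> complex set \<Rightarrow> nat" where
  "conductor R K = card ((\<lambda>x. {x + y | y. y \<in> R}) ` ring_of_integers K)"

definition heegner :: "nat \<Rightarrow> complex set \<Rightarrow> (complex \<Rightarrow> complex) \<Rightarrow> bool" where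
  "heegner N L f \<longleftrightarrow>
     (\<exists>\<tau>. imag_quad \<tau> \<and> is_order (End_ring L) (quad_field \<tau>) \<and>
        coprime (conductor (End_ring L) (quad_field \<tau>)) N) \<and>
     (\<exists>\<alpha>\<in>End_ring L. \<forall>x\<in>torsion N L. f x - \<alpha> * x \<in> L)"

end

theory Submission
  imports Defs
begin



lemma int_of_rat_eq:
  fixes q :: rat
  assumes "quotient_of q = (a, b)" shows "q = of_int a / of_int b" "b > 0" "coprime a b"
  using assms quotient_of_div quotient_of_denom_pos quotient_of_coprime by auto

lemma rat_sq_int:
  fixes q :: rat assumes "q^2 \<in> \<int>" shows "q \<in> \<int>"
proof -
  obtain a b where qb: "quotient_of q = (a,b)" by (cases "quotient_of q")
  note h = int_of_rat_eq[OF qb]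
  from assms obtain z where z: "q^2 = of_int z" by (auto elim: Ints_cases)
  have "of_int a ^ 2 / of_int b ^ 2 = (of_int z :: rat)" using z h(1) by (simp add: power_divide)
  hence "of_int (a^2) = (of_int (z * b^2) :: rat)" using h(2) by (simp add: field_simps)
  hence e: "a^2 = z * b^2" by (simp only: of_int_eq_iff)
  hence "b^2 dvd a^2" by simp
  moreover have "coprime (b^2) (a^2)" using h(3) by (simp add: coprime_commute)
  ultimately have "is_unit (b^2)" using coprime_absorb_left by (metis dvd_refl coprime_common_divisor)
  hence "b = 1" using h(2) by (simp add: power2_eq_square zmult_eq_1_iff)
  thus ?thesis using h(1) by simp
qed

lemma rat_pow_int:
  fixes q :: rat and E :: int assumes "E > 0" "\<And>k. of_int E * q^k \<in> \<int>" shows "q \<in> \<int>"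
proof -
  obtain a b where qb: "quotient_of q = (a,b)" by (cases "quotient_of q")
  note h = int_of_rat_eq[OF qb]
  have dv: "b^k dvd E" for k
  proof -
    from assms(2)[of k] obtain z where z: "of_int E * q^k = of_int z" by (auto elim: Ints_cases)
    hence "of_int E * (of_int a ^ k / of_int b ^ k) = (of_int z :: rat)" using h(1) by (simp add: power_divide)
    hence "of_int (E * a^k) = (of_int (z * b^k) :: rat)" using h(2) by (simp add: field_simps)
    hence "E * a^k = z * b^k" by (simp only: of_int_eq_iff)
    hence "b^k dvd E * a^k" by (metis dvd_triv_right)
    moreover have "coprime (b^k) (a^k)" using h(3) by (simp add: coprime_commute)
    ultimately show ?thesis by (simp add: coprime_dvd_mult_left_iff)
  qed
  have "b = 1"
  proof (rule ccontr)
    assume "b \<noteq> 1" hence b2: "b \<ge> 2" using h(2) by simp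
    have "b ^ nat E \<le> E" using dv[of "nat E"] assms(1) by (simp add: zdvd_imp_le)
    moreover have "2 ^ nat E \<le> b ^ nat E" using b2 by (simp add: power_mono)
    moreover have "E < 2 ^ nat E" using assms(1)
      by (metis int_nat_eq less_exp of_nat_less_iff order_less_imp_le of_nat_numeral of_nat_power)
    ultimately show False by simp
  qed
  thus ?thesis using h(1) by simp
qed




lemma cnj_of_rat [simp]: "cnj (of_rat q :: complex) = of_rat q"
proof -
  obtain a b where qb: "quotient_of q = (a,b)" by (cases "quotient_of q")
  have "q = of_int a / of_int b" using qb quotient_of_div by auto
  hence "(of_rat q :: complex) = of_int a / of_int b" by (simp add: of_rat_divide)
  thus ?thesis by simp
qed

definition den :: "rat \<Rightarrow> int" where "den q = snd (quotient_of q)"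

lemma den_pos: "den q > 0" unfolding den_def using quotient_of_denom_pos' by auto

lemma den_mult_Ints: "of_int (den q) * q \<in> \<int>"
proof -
  obtain a b where qb: "quotient_of q = (a,b)" by (cases "quotient_of q")
  have "q = of_int a / of_int b" "b > 0" using qb quotient_of_div quotient_of_denom_pos by auto
  thus ?thesis unfolding den_def qb by simp
qed

lemma dvd_mult_Ints: "den q dvd E \<Longrightarrow> of_int E * q \<in> \<int>"
proof -
  assume "den q dvd E" then obtain k where "E = den q * k" by auto
  hence "of_int E * q = of_int k * (of_int (den q) * q)" by simp
  thus ?thesis using den_mult_Ints by (metis Ints_mult Ints_of_int)
qed

fun pw :: "rat \<Rightarrow> rat \<Rightarrow> nat \<Rightarrow> rat \<times> rat" where
  "pw t s 0 = (1, 0)"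
| "pw t s (Suc k) = (- s * snd (pw t s k), fst (pw t s k) + t * snd (pw t s k))"

lemma pw_eq:
  fixes x :: complex
  assumes "x^2 = of_rat t * x - of_rat s"
  shows "x^k = of_rat (fst (pw t s k)) + of_rat (snd (pw t s k)) * x"
proof (induction k)
  case 0 then show ?case by simp
next
  case (Suc k)
  have "x^Suc k = x * x^k" by simp
  also have "\<dots> = of_rat (fst (pw t s k)) * x + of_rat (snd (pw t s k)) * x^2"
    using Suc by (simp add: algebra_simps power2_eq_square)
  also have "\<dots> = of_rat (fst (pw t s k)) * x + of_rat (snd (pw t s k)) * (of_rat t * x - of_rat s)"
    using assms by simp
  also have "\<dots> = of_rat (fst (pw t s (Suc k))) + of_rat (snd (pw t s (Suc k))) * x"
    by (simp add: algebra_simps of_rat_add of_rat_mult of_rat_minus)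
  finally show ?case .
qed

lemma sum_inM:
  fixes P :: "complex \<Rightarrow> bool"
  assumes "P 0" "\<And>y z. P y \<Longrightarrow> P z \<Longrightarrow> P (y + z)" "\<And>y k. P y \<Longrightarrow> P (of_int k * y)"
    and "finite A" and "\<And>j. j \<in> A \<Longrightarrow> P (g j)"
  shows "P (\<Sum>j\<in>A. of_int (h j) * g j)"
  using assms(4,5)
proof (induction A rule: finite_induct)
  case empty then show ?case using assms(1) by simp
next
  case (insert a A) then show ?case using assms(2,3) by simp
qed

lemma alg_int_quad:
  fixes x :: complex and t s :: rat
  assumes ht: "of_rat t = x + cnj x" and hs: "of_rat s = x * cnj x" and ai: "alg_int x"
  shows "t \<in> \<int> \<and> s \<in> \<int>"
proof -
  obtain p :: "int poly" where p1: "lead_coeff p = 1" and p0: "poly (map_poly of_int p) x = 0"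
    using ai unfolding alg_int_def by auto
  define d where "d = degree p"
  have x2: "x^2 = of_rat t * x - of_rat s" using ht hs by (simp add: algebra_simps power2_eq_square)
  have degm: "degree (map_poly (of_int :: int \<Rightarrow> complex) p) = d"
    unfolding d_def by (rule degree_map_poly) simp
  have polyeq: "(\<Sum>i\<le>d. of_int (Polynomial.coeff p i) * x^i) = 0"
    using p0 unfolding poly_altdef degm by (simp add: Polynomial.coeff_map_poly)
  have cd: "Polynomial.coeff p d = 1" using p1 d_def by simp
  have dpos: "d > 0"
  proof (rule ccontr)
    assume "\<not> d > 0" hence "d = 0" by simp
    thus False using polyeq cd by simp
  qed
  have xd: "x^d = - (\<Sum>j<d. of_int (Polynomial.coeff p j) * x^j)"
  proof -
    have "(\<Sum>i\<le>d. of_int (Polynomial.coeff p i) * x^i) = (\<Sum>j<d. of_int (Polynomial.coeff p j) * x^j) + x^d"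
      using cd by (simp add: lessThan_Suc_atMost[symmetric])
    thus ?thesis using polyeq by (simp add: eq_neg_iff_add_eq_0 add.commute)
  qed
  define \<Delta> where "\<Delta> = (\<Prod>j<d. den (fst (pw t s j)) * den (snd (pw t s j)))"
  have dvd\<Delta>: "den (fst (pw t s j)) dvd \<Delta>" "den (snd (pw t s j)) dvd \<Delta>" if "j < d" for j
  proof -
    have "den (fst (pw t s j)) * den (snd (pw t s j)) dvd \<Delta>" unfolding \<Delta>_def
      by (rule dvd_prodI) (use that in auto)
    thus "den (fst (pw t s j)) dvd \<Delta>" "den (snd (pw t s j)) dvd \<Delta>"
      using dvd_mult_left dvd_mult_right by blast+
  qed
  have \<Delta>pos: "\<Delta> > 0" unfolding \<Delta>_def by (intro prod_pos) (simp add: den_pos)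
  define P where "P y \<longleftrightarrow> (\<exists>u v :: int. of_int \<Delta> * y = of_int u + of_int v * x)" for y
  have P0: "P 0" unfolding P_def by (rule exI[of _ 0], rule exI[of _ 0]) simp
  have Padd: "P (y + z)" if "P y" "P z" for y z
  proof -
    from that obtain u v u' v' where "of_int \<Delta> * y = of_int u + of_int v * x"
      "of_int \<Delta> * z = of_int u' + of_int v' * x" unfolding P_def by blast
    hence "of_int \<Delta> * (y + z) = of_int (u+u') + of_int (v+v') * x" by (simp add: algebra_simps)
    thus ?thesis unfolding P_def by blast
  qed
  have Psc: "P (of_int k * y)" if "P y" for y k
  proof -
    from that obtain u v where "of_int \<Delta> * y = of_int u + of_int v * x" unfolding P_def by blast
    have "of_int \<Delta> * (of_int k * y) = of_int k * (of_int \<Delta> * y)" by (simp only: mult.left_commute)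
    also have "\<dots> = of_int k * (of_int u + of_int v * x)" by (simp only: \<open>of_int \<Delta> * y = _\<close>)
    also have "\<dots> = of_int (k*u) + of_int (k*v) * x" by (simp only: distrib_left mult.assoc of_int_mult)
    finally have "of_int \<Delta> * (of_int k * y) = of_int (k*u) + of_int (k*v) * x" .
    thus ?thesis unfolding P_def by blast
  qed
  have Psmall: "P (x^j)" if "j < d" for j
  proof -
    from dvd_mult_Ints[OF dvd\<Delta>(1)[OF that]] obtain u where u: "of_int \<Delta> * fst (pw t s j) = of_int u"
      by (auto elim: Ints_cases)
    from dvd_mult_Ints[OF dvd\<Delta>(2)[OF that]] obtain v where v: "of_int \<Delta> * snd (pw t s j) = of_int v"
      by (auto elim: Ints_cases)
    have "of_int \<Delta> * x^j = of_int \<Delta> * of_rat (fst (pw t s j)) + of_int \<Delta> * of_rat (snd (pw t s j)) * x"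
      using pw_eq[OF x2, of j] by (simp only: distrib_left mult.assoc)
    also have "\<dots> = of_rat (of_int \<Delta> * fst (pw t s j)) + of_rat (of_int \<Delta> * snd (pw t s j)) * x"
      by (simp only: of_rat_mult of_rat_of_int_eq)
    also have "\<dots> = of_int u + of_int v * x" using u v by simp
    finally show ?thesis unfolding P_def by blast
  qed
  have Ppow: "P (x^k)" for k
  proof (induction k rule: less_induct)
    case (less k)
    show ?case
    proof (cases "k < d")
      case True then show ?thesis by (rule Psmall)
    next
      case False
      have "x^k = x^(k-d) * x^d" using False by (simp add: power_add[symmetric])
      also have "\<dots> = - (\<Sum>j<d. of_int (Polynomial.coeff p j) * x^(k-d+j))"
        unfolding xd by (simp add: sum_distrib_left power_add algebra_simps)
      also have "\<dots> = of_int (-1) * (\<Sum>j<d. of_int (Polynomial.coeff p j) * x^(k-d+j))" by simp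
      finally have e: "x^k = \<dots>" .
      have "P (\<Sum>j<d. of_int (Polynomial.coeff p j) * x^(k-d+j))"
        by (rule sum_inM[OF P0 Padd Psc]) (use False dpos less in auto)
      thus ?thesis unfolding e by (rule Psc)
    qed
  qed
  have Ppow1: "P ((x+1)^k)" for k
  proof -
    have "(x+1)^k = (\<Sum>j\<le>k. of_int (int (k choose j)) * x^j)"
      by (subst binomial_ring) simp
    thus ?thesis by (simp only:) (rule sum_inM[OF P0 Padd Psc], auto intro: Ppow)
  qed
  define E where "E = \<Delta>^2 * den t * den s"
  have Epos: "E > 0" unfolding E_def using \<Delta>pos den_pos by simp
  have key: "of_int E * r \<in> \<int>" if "P y" "y * cnj y = of_rat r" for y r
  proof -
    from that(1) obtain u v where uv: "of_int \<Delta> * y = of_int u + of_int v * x" unfolding P_def by blast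
    have "(of_int \<Delta> * y) * cnj (of_int \<Delta> * y) = (of_int u + of_int v * x) * (of_int u + of_int v * cnj x)"
      by (simp add: uv)
    also have "\<dots> = of_int (u^2) + of_int (u*v) * (x + cnj x) + of_int (v^2) * (x * cnj x)"
      by (simp add: algebra_simps power2_eq_square)
    also have "\<dots> = of_rat (of_int (u^2) + of_int (u*v) * t + of_int (v^2) * s)"
      by (simp add: ht[symmetric] hs[symmetric] of_rat_add of_rat_mult of_rat_power)
    finally have c1: "(of_int \<Delta> * y) * cnj (of_int \<Delta> * y) = (of_rat (of_int (u^2) + of_int (u*v) * t + of_int (v^2) * s) :: complex)" .
    have "(of_int \<Delta> * y) * cnj (of_int \<Delta> * y) = of_int \<Delta> * of_int \<Delta> * (y * cnj y)"
      by (simp add: mult_ac)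
    also have "\<dots> = of_rat (of_int (\<Delta>^2) * r)" using that(2) by (simp add: of_rat_mult power2_eq_square)
    finally have "(of_rat (of_int (\<Delta>^2) * r) :: complex) = of_rat (of_int (u^2) + of_int (u*v) * t + of_int (v^2) * s)"
      using c1 by simp
    hence e: "of_int (\<Delta>^2) * r = of_int (u^2) + of_int (u*v) * t + of_int (v^2) * s"
      by (simp only: of_rat_eq_iff)
    have "of_int E * r = of_int (den t * den s) * (of_int (\<Delta>^2) * r)" unfolding E_def by (simp add: algebra_simps)
    also have "\<dots> = of_int (den s * u^2 * den t) + of_int (u*v*den s) * (of_int (den t) * t) + of_int (v^2 * den t) * (of_int (den s) * s)"
      unfolding e by (simp add: algebra_simps)
    finally show ?thesis using den_mult_Ints[of t] den_mult_Ints[of s]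
      by (metis Ints_add Ints_mult Ints_of_int)
  qed
  have s1: "of_int E * s^k \<in> \<int>" for k
    by (rule key[OF Ppow]) (simp add: hs of_rat_power power_mult_distrib[symmetric])
  have s2: "of_int E * (s + t + 1)^k \<in> \<int>" for k
  proof (rule key[OF Ppow1])
    have "(x+1) * cnj (x+1) = x * cnj x + (x + cnj x) + 1" by (simp add: algebra_simps)
    thus "(x + 1) ^ k * cnj ((x + 1) ^ k) = of_rat ((s + t + 1) ^ k)"
      by (simp add: hs[symmetric] ht[symmetric] of_rat_power of_rat_add power_mult_distrib[symmetric])
  qed
  have "s \<in> \<int>" by (rule rat_pow_int[OF Epos s1])
  moreover have "s + t + 1 \<in> \<int>" by (rule rat_pow_int[OF Epos s2])
  ultimately have "t \<in> \<int>" by (metis Ints_1 Ints_diff add_diff_cancel_left' add_diff_cancel_right')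
  with \<open>s \<in> \<int>\<close> show ?thesis by simp
qed




lemma of_rat_complex: "(of_rat q :: complex) = of_real (of_rat q)"
proof -
  obtain a b where qb: "quotient_of q = (a,b)" by (cases "quotient_of q")
  have "q = of_int a / of_int b" using qb quotient_of_div by auto
  thus ?thesis by (simp add: of_rat_divide)
qed

lemma indep_real:
  fixes w :: complex and a b :: real
  assumes "Im w \<noteq> 0" "of_real a + of_real b * w = 0" shows "a = 0 \<and> b = 0"
proof -
  have "Im (of_real a + of_real b * w) = b * Im w" by simp
  hence "b = 0" using assms by simp
  thus ?thesis using assms by simp
qed

lemma indep_int:
  fixes w :: complex and a b :: int
  assumes "Im w \<noteq> 0" "of_int a + of_int b * w = 0" shows "a = 0 \<and> b = 0"
  using indep_real[OF assms(1), of "of_int a" "of_int b"] assms(2) by simp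

lemma indep_rat:
  fixes w :: complex and a b :: rat
  assumes "Im w \<noteq> 0" "of_rat a + of_rat b * w = 0" shows "a = 0 \<and> b = 0"
  using indep_real[OF assms(1), of "of_rat a" "of_rat b"] assms(2) by (simp add: of_rat_complex)

locale lat =
  fixes w1 w2 :: complex
  assumes nondeg: "Im (w2 / w1) \<noteq> 0"
begin

abbreviation "L \<equiv> lattice_gen w1 w2"

lemma w1nz: "w1 \<noteq> 0" using nondeg by auto

lemma indep:
  fixes a b :: real
  assumes "of_real a * w1 + of_real b * w2 = 0" shows "a = 0 \<and> b = 0"
proof -
  have "(of_real a * w1 + of_real b * w2) / w1 = of_real a + of_real b * (w2 / w1)"
    using w1nz by (simp add: field_simps)
  thus ?thesis using indep_real[OF nondeg, of a b] assms by simp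
qed

lemma indepI:
  fixes a b :: int
  assumes "of_int a * w1 + of_int b * w2 = 0" shows "a = 0 \<and> b = 0"
  using indep[of "of_int a" "of_int b"] assms by simp

lemma memL: "x \<in> L \<longleftrightarrow> (\<exists>a b :: int. x = of_int a * w1 + of_int b * w2)"
  unfolding lattice_gen_def by auto

lemma L0: "0 \<in> L" unfolding memL by (rule exI[of _ 0], rule exI[of _ 0]) simp
lemma Ladd: "x \<in> L \<Longrightarrow> y \<in> L \<Longrightarrow> x + y \<in> L"
  unfolding memL by (auto, rule_tac x="a+aa" in exI, rule_tac x="b+ba" in exI, simp add: algebra_simps)
lemma Lsc: "x \<in> L \<Longrightarrow> of_int k * x \<in> L"
  unfolding memL by (auto, rule_tac x="k*a" in exI, rule_tac x="k*b" in exI, simp add: algebra_simps)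
lemma Lneg: "x \<in> L \<Longrightarrow> - x \<in> L" using Lsc[of x "-1"] by simp
lemma Ldiff: "x \<in> L \<Longrightarrow> y \<in> L \<Longrightarrow> x - y \<in> L" using Ladd[OF _ Lneg] by (simp)
lemma Lnsc: "x \<in> L \<Longrightarrow> of_nat k * x \<in> L" using Lsc[of x "int k"] by simp
lemma Lw1: "w1 \<in> L" unfolding memL by (rule exI[of _ 1], rule exI[of _ 0]) simp
lemma Lw2: "w2 \<in> L" unfolding memL by (rule exI[of _ 0], rule exI[of _ 1]) simp
lemma Lcomb: "of_int a * w1 + of_int b * w2 \<in> L" unfolding memL by blast

lemma Lsum: "finite A \<Longrightarrow> (\<And>i. i \<in> A \<Longrightarrow> g i \<in> L) \<Longrightarrow> sum g A \<in> L"
  by (induction A rule: finite_induct) (auto intro: L0 Ladd)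

definition Pt :: "nat \<Rightarrow> int \<Rightarrow> int \<Rightarrow> complex" where
  "Pt N x1 x2 = (of_int x1 * w1 + of_int x2 * w2) / of_nat N"

lemma Pt_in_L:
  assumes "N > 0" shows "Pt N x1 x2 \<in> L \<longleftrightarrow> int N dvd x1 \<and> int N dvd x2"
proof
  assume "Pt N x1 x2 \<in> L"
  then obtain a b :: int where e: "Pt N x1 x2 = of_int a * w1 + of_int b * w2" unfolding memL by blast
  hence "of_int x1 * w1 + of_int x2 * w2 = of_nat N * (of_int a * w1 + of_int b * w2)"
    using assms unfolding Pt_def by (simp add: field_simps)
  hence "of_int (x1 - int N * a) * w1 + of_int (x2 - int N * b) * w2 = 0"
    by (simp add: algebra_simps)
  from indepI[OF this] show "int N dvd x1 \<and> int N dvd x2" by (simp add: dvd_def)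
next
  assume "int N dvd x1 \<and> int N dvd x2"
  then obtain a b where "x1 = int N * a" "x2 = int N * b" by (auto simp: dvd_def)
  hence "Pt N x1 x2 = of_int a * w1 + of_int b * w2" using assms unfolding Pt_def by (simp add: field_simps)
  thus "Pt N x1 x2 \<in> L" by (simp add: Lcomb)
qed

lemma torsion_iff:
  assumes "N > 0" shows "y \<in> torsion N L \<longleftrightarrow> (\<exists>x1 x2. y = Pt N x1 x2)"
proof
  assume "y \<in> torsion N L"
  then obtain a b :: int where "of_nat N * y = of_int a * w1 + of_int b * w2"
    unfolding torsion_def memL by auto
  hence "y = Pt N a b" unfolding Pt_def using assms by (simp add: field_simps)
  thus "\<exists>x1 x2. y = Pt N x1 x2" by blast
next
  assume "\<exists>x1 x2. y = Pt N x1 x2"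
  then obtain x1 x2 where "y = Pt N x1 x2" by blast
  thus "y \<in> torsion N L" unfolding torsion_def Pt_def using assms by (simp add: Lcomb)
qed

lemma Pt_lin: "Pt N x1 x2 = of_int x1 * Pt N 1 0 + of_int x2 * Pt N 0 1"
  unfolding Pt_def by (simp add: divide_inverse algebra_simps)

lemma Pt_diff: "Pt N a b - Pt N c d = Pt N (a - c) (b - d)"
  unfolding Pt_def by (simp add: divide_inverse algebra_simps)
lemma Pt_add: "Pt N a b + Pt N c d = Pt N (a + c) (b + d)"
  unfolding Pt_def by (simp add: divide_inverse algebra_simps)
lemma Pt_sc: "of_int k * Pt N a b = Pt N (k * a) (k * b)"
  unfolding Pt_def by (simp add: divide_inverse algebra_simps)

lemma L_in_torsion: "N > 0 \<Longrightarrow> x \<in> L \<Longrightarrow> x \<in> torsion N L"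
  unfolding torsion_def using Lnsc by auto

lemma L_div_torsion: "N > 0 \<Longrightarrow> x \<in> L \<Longrightarrow> x / of_nat N \<in> torsion N L"
  unfolding torsion_def by simp

abbreviation "R \<equiv> End_ring L"

lemma End_iff: "e \<in> R \<longleftrightarrow> e * w1 \<in> L \<and> e * w2 \<in> L"
proof
  assume "e \<in> R" thus "e * w1 \<in> L \<and> e * w2 \<in> L" unfolding End_ring_def using Lw1 Lw2 by auto
next
  assume h: "e * w1 \<in> L \<and> e * w2 \<in> L"
  show "e \<in> R" unfolding End_ring_def
  proof (rule CollectI, rule subsetI)
    fix y assume "y \<in> (\<lambda>z. e * z) ` L"
    then obtain z where z: "z \<in> L" "y = e * z" by auto
    then obtain a b :: int where "z = of_int a * w1 + of_int b * w2" unfolding memL by auto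
    hence "y = e * (of_int a * w1 + of_int b * w2)" using z by simp
    hence "y = of_int a * (e * w1) + of_int b * (e * w2)" by (simp add: algebra_simps)
    thus "y \<in> L" using h by (simp add: Ladd Lsc)
  qed
qed

lemma EndD: "e \<in> R \<Longrightarrow> x \<in> L \<Longrightarrow> e * x \<in> L" unfolding End_ring_def by auto

lemma End_coords:
  assumes "e \<in> R"
  obtains p q r s :: int where "e * w1 = of_int p * w1 + of_int q * w2" "e * w2 = of_int r * w1 + of_int s * w2"
  using assms unfolding End_iff memL by blast

lemma End_int: "of_int k \<in> R" unfolding End_iff by (simp add: Lsc Lw1 Lw2)
lemma End_1: "1 \<in> R" using End_int[of 1] by simp
lemma End_add: "e \<in> R \<Longrightarrow> e' \<in> R \<Longrightarrow> e + e' \<in> R" unfolding End_iff by (simp add: distrib_right Ladd)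
lemma End_mult: "e \<in> R \<Longrightarrow> e' \<in> R \<Longrightarrow> e * e' \<in> R"
  unfolding End_iff by (metis EndD End_iff mult.assoc)
lemma End_sc: "e \<in> R \<Longrightarrow> of_int k * e \<in> R" using End_mult End_int by blast
lemma End_neg: "e \<in> R \<Longrightarrow> - e \<in> R" using End_sc[of e "-1"] by simp
lemma End_diff: "e \<in> R \<Longrightarrow> e' \<in> R \<Longrightarrow> e - e' \<in> R" using End_add[OF _ End_neg] by simp

lemma End_charpoly:
  assumes "e \<in> R" obtains T n :: int where "e^2 = of_int T * e - of_int n"
proof -
  obtain p q r s :: int where h1: "e * w1 = of_int p * w1 + of_int q * w2"
    and h2: "e * w2 = of_int r * w1 + of_int s * w2" using End_coords[OF assms] by blast
  have "(e - of_int p) * w1 = of_int q * w2" using h1 by (simp add: algebra_simps)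
  hence "(e - of_int s) * ((e - of_int p) * w1) = of_int q * ((e - of_int s) * w2)" by (simp add: algebra_simps)
  also have "(e - of_int s) * w2 = of_int r * w1" using h2 by (simp add: algebra_simps)
  finally have "((e - of_int s) * (e - of_int p) - of_int q * of_int r) * w1 = 0" by (simp add: algebra_simps)
  hence "(e - of_int s) * (e - of_int p) - of_int q * of_int r = 0" using w1nz by simp
  hence "e^2 = of_int (p + s) * e - of_int (p * s - q * r)" by (simp add: algebra_simps power2_eq_square)
  thus ?thesis using that by blast
qed

lemma End_tau:
  assumes "e \<in> R" obtains p q :: int where "e = of_int p + of_int q * (w2 / w1)"
proof -
  obtain p q r s :: int where h1: "e * w1 = of_int p * w1 + of_int q * w2" using End_coords[OF assms] by blast
  hence "e = of_int p + of_int q * (w2 / w1)" using w1nz by (simp add: field_simps)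
  thus ?thesis using that by blast
qed

lemma End_real_int:
  assumes "e \<in> R" "Im e = 0" obtains k :: int where "e = of_int k"
proof -
  define \<tau> where "\<tau> = w2 / w1"
  obtain p q :: int where e: "e = of_int p + of_int q * \<tau>" using End_tau[OF assms(1)] \<tau>_def by blast
  have "Im e = of_int q * Im \<tau>" using e by simp
  hence "q = 0" using assms(2) nondeg \<tau>_def by simp
  thus ?thesis using e that by simp
qed

lemma End_conj_vieta:
  assumes "e \<in> R" "Im e \<noteq> 0" "e^2 = of_int T * e - of_int n"
  shows "e + cnj e = of_int T" "e * cnj e = of_int n"
proof -
  have "cnj e ^ 2 = of_int T * cnj e - of_int n" using arg_cong[OF assms(3), of cnj] by simp
  have "(e - cnj e) * (e + cnj e - of_int T) = (e^2 - (of_int T * e - of_int n)) - (cnj e ^ 2 - (of_int T * cnj e - of_int n))"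
    by (simp add: algebra_simps power2_eq_square)
  hence "(e - cnj e) * (e + cnj e - of_int T) = 0" using assms(3) \<open>cnj e ^ 2 = _\<close> by simp
  moreover have "e \<noteq> cnj e" using assms(2) by (metis Reals_cnj_iff complex_is_Real_iff)
  ultimately show "e + cnj e = of_int T" by simp
  hence ce: "cnj e = of_int T - e" by (simp add: algebra_simps)
  show "e * cnj e = of_int n" unfolding ce using assms(3) by (simp add: algebra_simps power2_eq_square)
qed

lemma End_cnj: assumes "e \<in> R" shows "cnj e \<in> R"
proof (cases "Im e = 0")
  case True thus ?thesis using assms by (metis End_real_int complex_cnj_of_int)
next
  case False
  obtain T n where "e^2 = of_int T * e - of_int n" using End_charpoly[OF assms] by blast
  from End_conj_vieta(1)[OF assms False this] have "cnj e = of_int T - e" by (simp add: algebra_simps)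
  thus ?thesis using End_diff[OF End_int assms] by simp
qed

lemma End_Ldiv: assumes "N > 0" "\<And>x. x \<in> torsion N L \<Longrightarrow> e * x \<in> L" shows "e / of_nat N \<in> R"
  unfolding End_iff using assms(2)[OF L_div_torsion[OF assms(1) Lw1]] assms(2)[OF L_div_torsion[OF assms(1) Lw2]]
  by (simp add: divide_inverse mult_ac)

end



definition OKc :: "int \<Rightarrow> int \<Rightarrow> rat \<Rightarrow> rat \<Rightarrow> bool" where
  "OKc T n a b \<longleftrightarrow> 2*a + b * of_int T \<in> \<int> \<and> a^2 + a*b*of_int T + b^2 * of_int n \<in> \<int>"

lemma OKc_disc: assumes "OKc T n a b" shows "b * of_int (T^2 - 4*n) \<in> \<int>"
proof -
  from assms obtain t s :: int where t: "2*a + b * of_int T = of_int t" and s: "a^2 + a*b*of_int T + b^2 * of_int n = of_int s"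
    unfolding OKc_def by (auto elim!: Ints_cases)
  have w: "b^2 * of_int (T^2 - 4*n) = of_int (t^2 - 4*s)"
  proof -
    have "of_int (t^2 - 4*s) = (2*a + b * of_int T)^2 - 4 * (a^2 + a*b*of_int T + b^2 * of_int n)"
      using t s by simp
    also have "\<dots> = b^2 * of_int (T^2 - 4*n)" by (simp add: algebra_simps power2_eq_square)
    finally show ?thesis by simp
  qed
  have "(b * of_int (T^2 - 4*n))^2 = (b^2 * of_int (T^2 - 4*n)) * of_int (T^2 - 4*n)"
    by (simp add: power2_eq_square)
  also have "\<dots> = of_int ((t^2 - 4*s) * (T^2 - 4*n))" unfolding w by simp
  finally have "(b * of_int (T^2 - 4*n))^2 = of_int ((t^2 - 4*s) * (T^2 - 4*n))" .
  hence "(b * of_int (T^2 - 4*n))^2 \<in> \<int>" by simp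
  thus ?thesis by (rule rat_sq_int)
qed

lemma OKc_int: "OKc T n (of_int i) (of_int j)"
  unfolding OKc_def by (metis Ints_add Ints_mult Ints_of_int Ints_power Ints_numeral)

lemma OKc_zero: "OKc T n a 0 \<Longrightarrow> a \<in> \<int>"
  unfolding OKc_def by (auto intro: rat_sq_int)

lemma OKc_sc: "OKc T n a b \<Longrightarrow> OKc T n (of_int k * a) (of_int k * b)"
proof -
  assume h: "OKc T n a b"
  have "2 * (of_int k * a) + of_int k * b * of_int T = of_int k * (2*a + b * of_int T)" by (simp add: algebra_simps)
  moreover have "(of_int k * a)^2 + (of_int k * a) * (of_int k * b) * of_int T + (of_int k * b)^2 * of_int n
     = of_int (k^2) * (a^2 + a*b*of_int T + b^2 * of_int n)" by (simp add: algebra_simps power2_eq_square)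
  ultimately show ?thesis using h unfolding OKc_def by (metis Ints_mult Ints_of_int)
qed

lemma OKc_diff:
  assumes h1: "OKc T n a1 b1" and h2: "OKc T n a2 b2" shows "OKc T n (a1 - a2) (b1 - b2)"
proof -
  define D where "D = T^2 - 4*n"
  from h1 obtain t1 s1 :: int where t1: "2*a1 + b1 * of_int T = of_int t1" and s1: "a1^2 + a1*b1*of_int T + b1^2 * of_int n = of_int s1"
    unfolding OKc_def by (auto elim!: Ints_cases)
  from h2 obtain t2 s2 :: int where t2: "2*a2 + b2 * of_int T = of_int t2" and s2: "a2^2 + a2*b2*of_int T + b2^2 * of_int n = of_int s2"
    unfolding OKc_def by (auto elim!: Ints_cases)
  have W1: "b1^2 * of_int D = of_int (t1^2 - 4*s1)"
  proof -
    have "of_int (t1^2 - 4*s1) = (2*a1 + b1 * of_int T)^2 - 4 * (a1^2 + a1*b1*of_int T + b1^2 * of_int n)"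
      using t1 s1 by simp
    also have "\<dots> = b1^2 * of_int D" unfolding D_def by (simp add: algebra_simps power2_eq_square)
    finally show ?thesis by simp
  qed
  have W2: "b2^2 * of_int D = of_int (t2^2 - 4*s2)"
  proof -
    have "of_int (t2^2 - 4*s2) = (2*a2 + b2 * of_int T)^2 - 4 * (a2^2 + a2*b2*of_int T + b2^2 * of_int n)"
      using t2 s2 by simp
    also have "\<dots> = b2^2 * of_int D" unfolding D_def by (simp add: algebra_simps power2_eq_square)
    finally show ?thesis by simp
  qed
  have sq: "(b1*b2*of_int D)^2 = of_int ((t1^2 - 4*s1) * (t2^2 - 4*s2))"
  proof -
    have "(b1*b2*of_int D)^2 = (b1^2 * of_int D) * (b2^2 * of_int D)" by (simp add: algebra_simps power2_eq_square)
    also have "\<dots> = of_int (t1^2 - 4*s1) * of_int (t2^2 - 4*s2)" by (simp only: W1 W2)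
    finally show ?thesis by simp
  qed
  have "(b1*b2*of_int D)^2 \<in> \<int>" unfolding sq by simp
  hence "b1*b2*of_int D \<in> \<int>" by (rule rat_sq_int)
  then obtain P :: int where P: "b1*b2*of_int D = of_int P" by (auto elim!: Ints_cases)
  have PP: "P^2 = (t1^2 - 4*s1) * (t2^2 - 4*s2)"
  proof -
    have "(of_int (P^2) :: rat) = (of_int P)^2" by simp
    also have "\<dots> = (b1*b2*of_int D)^2" by (simp only: P)
    also have "\<dots> = of_int ((t1^2 - 4*s1) * (t2^2 - 4*s2))" by (rule sq)
    finally show ?thesis by (simp only: of_int_eq_iff)
  qed
  have ev: "even (t1*t2 - P)"
  proof (rule ccontr)
    assume o: "odd (t1*t2 - P)"
    have o2: "odd (t1*t2 + P)"
    proof -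
      have e: "t1*t2 + P = (t1*t2 - P) + 2*P" by simp
      have "odd ((t1*t2 - P) + 2*P)" using o by simp
      thus ?thesis by (subst e)
    qed
    have "(t1*t2 - P) * (t1*t2 + P) = 4 * (s1 * t2^2 + s2 * t1^2 - 4*s1*s2)"
      using PP by (simp add: algebra_simps power2_eq_square)
    hence "even ((t1*t2 - P) * (t1*t2 + P))" by simp
    thus False using o o2 by simp
  qed
  then obtain X where X: "t1*t2 - P = 2 * X" unfolding dvd_def by blast
  have tdiff: "2*(a1 - a2) + (b1 - b2) * of_int T = of_int (t1 - t2)" using t1 t2 by (simp add: algebra_simps)
  have "(a1 - a2)^2 + (a1 - a2)*(b1 - b2)*of_int T + (b1-b2)^2 * of_int n
     = (a1^2 + a1*b1*of_int T + b1^2 * of_int n) + (a2^2 + a2*b2*of_int T + b2^2 * of_int n)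
       - (2*a1*a2 + (a1*b2 + a2*b1) * of_int T + 2*b1*b2*of_int n)"
    by (simp add: algebra_simps power2_eq_square)
  moreover have "2*a1*a2 + (a1*b2 + a2*b1) * of_int T + 2*b1*b2*of_int n = of_int X"
  proof -
    have "2 * (2*a1*a2 + (a1*b2 + a2*b1) * of_int T + 2*b1*b2*of_int n) = (2*a1 + b1 * of_int T) * (2*a2 + b2 * of_int T) - b1*b2*of_int D"
      unfolding D_def by (simp add: algebra_simps power2_eq_square)
    also have "\<dots> = of_int t1 * of_int t2 - of_int P" unfolding t1 t2 P ..
    also have "\<dots> = of_int (t1*t2 - P)" by simp
    also have "\<dots> = 2 * of_int X" unfolding X by simp
    finally show ?thesis by simp
  qed
  ultimately have "(a1 - a2)^2 + (a1 - a2)*(b1 - b2)*of_int T + (b1-b2)^2 * of_int n = of_int (s1 + s2 - X)"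
    using s1 s2 by simp
  thus ?thesis unfolding OKc_def using tdiff by (metis Ints_of_int)
qed

lemma OKc_add: "OKc T n a1 b1 \<Longrightarrow> OKc T n a2 b2 \<Longrightarrow> OKc T n (a1 + a2) (b1 + b2)"
  using OKc_diff[of T n a1 b1 "-a2" "-b2"] OKc_sc[of T n a2 b2 "-1"] by simp

lemma OKc_torsion:
  fixes N :: nat
  assumes N: "prime N" "N \<noteq> 2" and nD: "\<not> int N dvd (T^2 - 4*n)"
    and h: "OKc T n a b" and ha: "of_nat N * a \<in> \<int>" and hb: "of_nat N * b \<in> \<int>"
  shows "a \<in> \<int> \<and> b \<in> \<int>"
proof -
  have Np: "N > 0" using N prime_gt_0_nat by blast
  have pN: "prime (int N)" using N by simp
  from ha obtain i where i: "of_nat N * a = of_int i" by (auto elim!: Ints_cases)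
  from hb obtain j where j: "of_nat N * b = of_int j" by (auto elim!: Ints_cases)
  have a: "a = of_int i / of_nat N" and b: "b = of_int j / of_nat N" using i j Np by (simp_all add: field_simps)
  from h obtain t s :: int where t: "2*a + b * of_int T = of_int t" and s: "a^2 + a*b*of_int T + b^2 * of_int n = of_int s"
    unfolding OKc_def by (auto elim!: Ints_cases)
  have "of_int (2*i + j*T) = (of_int (int N * t) :: rat)"
    using t unfolding a b using Np by (simp add: field_simps)
  hence d1: "int N dvd 2*i + j*T" by (simp only: of_int_eq_iff) simp
  have "of_int (i^2 + i*j*T + j^2*n) = (of_int (int N * (int N * s)) :: rat)"
    using s unfolding a b using Np by (simp add: field_simps power2_eq_square)
  hence d2: "int N dvd i^2 + i*j*T + j^2*n" by (simp only: of_int_eq_iff) simp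
  have "j^2 * (T^2 - 4*n) = (2*i + j*T)^2 - 4 * (i^2 + i*j*T + j^2*n)" by (simp add: algebra_simps power2_eq_square)
  moreover have "int N dvd (2*i + j*T)^2" using d1 by (simp add: power2_eq_square)
  moreover have "int N dvd 4 * (i^2 + i*j*T + j^2*n)" using d2 by (rule dvd_mult)
  ultimately have "int N dvd j^2 * (T^2 - 4*n)" by (simp only:) (rule dvd_diff)
  hence "int N dvd j^2 \<or> int N dvd (T^2 - 4*n)" using prime_dvd_mult_iff[OF pN] by blast
  hence "int N dvd j^2" using nD by blast
  hence "int N dvd j" using prime_dvd_power[OF pN] by blast
  hence "int N dvd j*T" by simp
  hence "int N dvd (2*i + j*T) - j*T" using d1 by (intro dvd_diff)
  hence "int N dvd 2 * i" by simp
  moreover have "\<not> int N dvd 2"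
  proof
    assume "int N dvd 2" hence "N dvd 2" using int_dvd_int_iff[of N 2] by simp
    hence "N \<le> 2" by (simp add: dvd_imp_le)
    thus False using N prime_ge_2_nat[of N] by simp
  qed
  ultimately have "int N dvd i" using prime_dvd_mult_iff[OF pN] by blast
  from \<open>int N dvd i\<close> \<open>int N dvd j\<close> obtain i' j' where "i = int N * i'" "j = int N * j'" unfolding dvd_def by blast
  hence "a = of_int i'" "b = of_int j'" using a b Np by simp_all
  thus ?thesis by simp
qed

lemma OKc_hermite:
  assumes D0: "T^2 - 4*n \<noteq> 0"
  obtains a0 :: rat and f :: nat where "f > 0" "OKc T n a0 (1 / of_nat f)"
    "\<And>a b. OKc T n a b \<Longrightarrow> \<exists>q i :: int. a = of_int i + of_int q * a0 \<and> b = of_int q / of_nat f"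
proof -
  define K0 where "K0 = \<bar>T^2 - 4*n\<bar>"
  have K0pos: "K0 > 0" using D0 K0_def by simp
  have Kb: "of_int K0 * b \<in> \<int>" if "OKc T n a b" for a b
  proof -
    have "b * of_int (T^2 - 4*n) \<in> \<int>" by (rule OKc_disc[OF that])
    moreover have "of_int K0 * b = b * of_int (T^2 - 4*n) \<or> of_int K0 * b = - (b * of_int (T^2 - 4*n))"
      unfolding K0_def by (cases "T^2 - 4*n \<ge> 0") (simp_all add: algebra_simps)
    ultimately show ?thesis by (metis Ints_minus)
  qed
  define S where "S j \<longleftrightarrow> 0 < j \<and> (\<exists>a. OKc T n a (of_nat j / of_int K0))" for j :: nat
  have SK: "S (nat K0)" unfolding S_def using K0pos OKc_int[of T n 0 1] by auto
  define j0 where "j0 = (LEAST j. S j)"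
  have Sj0: "S j0" unfolding j0_def by (rule LeastI[of S, OF SK])
  then obtain a0 where j0pos: "0 < j0" and a0: "OKc T n a0 (of_nat j0 / of_int K0)" unfolding S_def by blast
  have main: "\<exists>q i :: int. a = of_int i + of_int q * a0 \<and> b = of_int q * of_nat j0 / of_int K0" if h: "OKc T n a b" for a b
  proof -
    from Kb[OF h] obtain J where J: "of_int K0 * b = of_int J" by (auto elim!: Ints_cases)
    define q where "q = J div int j0"
    define r where "r = J mod int j0"
    have Jqr: "J = q * int j0 + r" unfolding q_def r_def by simp
    have r0: "0 \<le> r" "r < int j0" unfolding r_def using j0pos by simp_all
    have h2: "OKc T n (a - of_int q * a0) (b - of_int q * (of_nat j0 / of_int K0))"
      by (rule OKc_diff[OF h OKc_sc[OF a0]])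
    have br: "b - of_int q * (of_nat j0 / of_int K0) = of_int r / of_int K0"
      using J Jqr K0pos by (simp add: field_simps)
    have "r = 0"
    proof (rule ccontr)
      assume "r \<noteq> 0" hence "S (nat r)" unfolding S_def using r0 h2 br by auto
      hence "j0 \<le> nat r" unfolding j0_def by (rule Least_le)
      thus False using r0 by simp
    qed
    hence bq: "b = of_int q * of_nat j0 / of_int K0" using br by simp
    have "OKc T n (a - of_int q * a0) 0" using h2 br \<open>r = 0\<close> by simp
    hence "a - of_int q * a0 \<in> \<int>" by (rule OKc_zero)
    then obtain i where "a - of_int q * a0 = of_int i" by (auto elim!: Ints_cases)
    thus ?thesis using bq by (metis diff_add_cancel add.commute)
  qed
  from main[OF OKc_int[of T n 0 1]] obtain q1 where q1: "(1::rat) = of_int q1 * of_nat j0 / of_int K0" by auto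
  hence K0q: "K0 = q1 * int j0" using K0pos by (simp add: field_simps) (metis of_int_eq_iff of_int_mult of_int_of_nat_eq)
  hence q1pos: "q1 > 0" using K0pos j0pos by (simp add: zero_less_mult_iff)
  define f where "f = nat q1"
  have fr: "of_nat j0 / of_int K0 = 1 / (of_nat f :: rat)"
    unfolding f_def using K0q q1pos j0pos by (simp add: field_simps)
  show ?thesis
  proof (rule that[of f a0])
    show "f > 0" unfolding f_def using q1pos by simp
    show "OKc T n a0 (1 / of_nat f)" using a0 fr by simp
    fix a b assume "OKc T n a b"
    from main[OF this] obtain q i where "a = of_int i + of_int q * a0" "b = of_int q * of_nat j0 / of_int K0" by blast
    moreover have "of_int q * of_nat j0 / of_int K0 = (of_int q / of_nat f :: rat)"
    proof -
      have "of_int q * of_nat j0 / of_int K0 = of_int q * (of_nat j0 / (of_int K0 :: rat))" by simp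
      also have "\<dots> = (of_int q / of_nat f :: rat)" unfolding fr by simp
      finally show ?thesis .
    qed
    ultimately show "\<exists>q i :: int. a = of_int i + of_int q * a0 \<and> b = of_int q / of_nat f" by auto
  qed
qed




lemma vieta:
  fixes e :: complex
  assumes "Im e \<noteq> 0" "e^2 = of_int T * e - of_int n"
  shows "e + cnj e = of_int T" "e * cnj e = of_int n" "cnj e = of_int T - e"
proof -
  have c2: "cnj e ^ 2 = of_int T * cnj e - of_int n" using arg_cong[OF assms(2), of cnj] by simp
  have "(e - cnj e) * (e + cnj e - of_int T) = (e^2 - (of_int T * e - of_int n)) - (cnj e ^ 2 - (of_int T * cnj e - of_int n))"
    by (simp add: algebra_simps power2_eq_square)
  hence "(e - cnj e) * (e + cnj e - of_int T) = 0" using assms(2) c2 by simp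
  moreover have "e \<noteq> cnj e" using assms(1) by (metis Reals_cnj_iff complex_is_Real_iff)
  ultimately show s: "e + cnj e = of_int T" by simp
  thus ce: "cnj e = of_int T - e" by (simp add: algebra_simps)
  show "e * cnj e = of_int n" unfolding ce using assms(2) by (simp add: algebra_simps power2_eq_square)
qed

locale qord =
  fixes \<omega> :: complex and T n :: int
  assumes Imw: "Im \<omega> \<noteq> 0" and wsq: "\<omega>^2 = of_int T * \<omega> - of_int n"
begin

abbreviation "Rl \<equiv> lattice_gen 1 \<omega>"
abbreviation "K \<equiv> quad_field \<omega>"

lemma cw: "cnj \<omega> = of_int T - \<omega>" "\<omega> * cnj \<omega> = of_int n" using vieta[OF Imw wsq] by auto

lemma D0: "T^2 - 4*n \<noteq> 0"
proof
  assume h: "T^2 - 4*n = 0"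
  have "(\<omega> - cnj \<omega>)^2 = (\<omega> + cnj \<omega>)^2 - 4 * (\<omega> * cnj \<omega>)" by (simp add: algebra_simps power2_eq_square)
  also have "\<dots> = of_int (T^2 - 4*n)" using vieta[OF Imw wsq] by simp
  finally have "(\<omega> - cnj \<omega>)^2 = 0" using h by simp
  hence "\<omega> = cnj \<omega>" by simp
  thus False using Imw by (metis Reals_cnj_iff complex_is_Real_iff)
qed

lemma memRl: "z \<in> Rl \<longleftrightarrow> (\<exists>i j :: int. z = of_int i + of_int j * \<omega>)"
  unfolding lattice_gen_def by auto

lemma memK: "z \<in> K \<longleftrightarrow> (\<exists>a b. z = of_rat a + of_rat b * \<omega>)"
  unfolding quad_field_def by auto

lemma coord_eq:
  assumes "of_rat a + of_rat b * \<omega> = of_rat a' + of_rat b' * \<omega>" shows "a = a' \<and> b = b'"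
proof -
  have "of_rat (a - a') + of_rat (b - b') * \<omega> = 0" using assms by (simp add: of_rat_diff algebra_simps)
  from indep_rat[OF Imw this] show ?thesis by simp
qed

lemma rat_in_Rl: "of_rat a + of_rat b * \<omega> \<in> Rl \<longleftrightarrow> a \<in> \<int> \<and> b \<in> \<int>"
proof
  assume "of_rat a + of_rat b * \<omega> \<in> Rl"
  then obtain i j :: int where "of_rat a + of_rat b * \<omega> = of_int i + of_int j * \<omega>" unfolding memRl by blast
  hence "of_rat a + of_rat b * \<omega> = of_rat (of_int i) + of_rat (of_int j) * \<omega>" by simp
  from coord_eq[OF this] show "a \<in> \<int> \<and> b \<in> \<int>" by simp
next
  assume "a \<in> \<int> \<and> b \<in> \<int>"
  then obtain i j where "a = of_int i" "b = of_int j" by (auto elim!: Ints_cases)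
  thus "of_rat a + of_rat b * \<omega> \<in> Rl" unfolding memRl by auto
qed

lemma alg_int_iff: "alg_int (of_rat a + of_rat b * \<omega>) \<longleftrightarrow> OKc T n a b"
proof -
  define z where "z = of_rat a + of_rat b * \<omega>"
  have cz: "cnj z = of_rat a + of_rat b * (of_int T - \<omega>)" unfolding z_def using cw by simp
  have ht: "of_rat (2*a + b * of_int T) = z + cnj z" unfolding cz unfolding z_def
    by (simp add: of_rat_add of_rat_mult algebra_simps)
  have hs: "of_rat (a^2 + a*b*of_int T + b^2 * of_int n) = z * cnj z"
  proof -
    have "z * cnj z = of_rat a * of_rat a + of_rat a * of_rat b * of_int T + of_rat b * of_rat b * (\<omega> * (of_int T - \<omega>))"
      unfolding cz unfolding z_def by (simp add: algebra_simps)
    also have "\<omega> * (of_int T - \<omega>) = of_int n" using wsq by (simp add: algebra_simps power2_eq_square)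
    finally show ?thesis by (simp add: of_rat_add of_rat_mult power2_eq_square)
  qed
  show ?thesis
  proof
    assume "alg_int (of_rat a + of_rat b * \<omega>)"
    from alg_int_quad[OF ht hs this[folded z_def]] show "OKc T n a b" unfolding OKc_def by simp
  next
    assume "OKc T n a b"
    then obtain t s :: int where t: "2*a + b * of_int T = of_int t" and s: "a^2 + a*b*of_int T + b^2 * of_int n = of_int s"
      unfolding OKc_def by (auto elim!: Ints_cases)
    define p where "p = [:s, -t, 1:]"
    have "lead_coeff p = 1" unfolding p_def by simp
    moreover have "poly (map_poly of_int p) z = 0"
    proof -
      have "poly (map_poly of_int p) z = of_int s - of_int t * z + z^2" unfolding p_def
        by (simp add: map_poly_pCons algebra_simps power2_eq_square)
      also have "of_int s = z * cnj z" using hs s by simp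
      also have "of_int t = z + cnj z" using ht t by simp
      finally show ?thesis by (simp add: algebra_simps power2_eq_square)
    qed
    ultimately show "alg_int (of_rat a + of_rat b * \<omega>)" unfolding alg_int_def z_def by blast
  qed
qed

lemma memROI: "z \<in> ring_of_integers K \<longleftrightarrow> (\<exists>a b. z = of_rat a + of_rat b * \<omega> \<and> OKc T n a b)"
  unfolding ring_of_integers_def memK using alg_int_iff by auto

lemma Rl_add: "x \<in> Rl \<Longrightarrow> y \<in> Rl \<Longrightarrow> x + y \<in> Rl"
  unfolding memRl by (auto, rule_tac x="i+ia" in exI, rule_tac x="j+ja" in exI, simp add: algebra_simps)
lemma Rl_diff: "x \<in> Rl \<Longrightarrow> y \<in> Rl \<Longrightarrow> x - y \<in> Rl"
  unfolding memRl by (auto, rule_tac x="i-ia" in exI, rule_tac x="j-ja" in exI, simp add: algebra_simps)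
lemma Rl_mult: "x \<in> Rl \<Longrightarrow> y \<in> Rl \<Longrightarrow> x * y \<in> Rl"
proof -
  assume "x \<in> Rl" "y \<in> Rl"
  then obtain i j k l :: int where x: "x = of_int i + of_int j * \<omega>" and y: "y = of_int k + of_int l * \<omega>"
    unfolding memRl by blast
  have "x * y = of_int i * of_int k + (of_int i * of_int l + of_int j * of_int k) * \<omega> + of_int j * of_int l * \<omega>^2"
    unfolding x y by (simp add: algebra_simps power2_eq_square)
  also have "\<dots> = of_int (i*k - j*l*n) + of_int (i*l + j*k + j*l*T) * \<omega>"
    unfolding wsq by (simp add: algebra_simps)
  finally show ?thesis unfolding memRl by blast
qed
lemma Rl_0: "0 \<in> Rl" unfolding memRl by (rule exI[of _ 0], rule exI[of _ 0]) simp
lemma Rl_1: "1 \<in> Rl" unfolding memRl by (rule exI[of _ 1], rule exI[of _ 0]) simp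

lemma imag_quad_w: "imag_quad \<omega>"
  unfolding imag_quad_def
proof
  show "Im \<omega> \<noteq> 0" by (rule Imw)
  have "\<omega>^2 = of_rat (of_int (-n)) + of_rat (of_int T) * \<omega>" unfolding wsq of_rat_of_int_eq by simp
  thus "\<omega>^2 \<in> K" unfolding memK by blast
qed

lemma is_order_Rl: "is_order Rl K"
  unfolding is_order_def
proof (intro conjI)
  show "Rl \<subseteq> ring_of_integers K"
  proof
    fix z assume "z \<in> Rl"
    then obtain i j :: int where "z = of_int i + of_int j * \<omega>" unfolding memRl by blast
    hence "z = of_rat (of_int i) + of_rat (of_int j) * \<omega>" by simp
    thus "z \<in> ring_of_integers K" unfolding memROI using OKc_int by blast
  qed
  show "1 \<in> Rl" by (rule Rl_1)
  show "is_lattice Rl" unfolding is_lattice_def using Imw by (intro exI[of _ 1] exI[of _ \<omega>]) simp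
  show "\<forall>x\<in>Rl. \<forall>y\<in>Rl. x + y \<in> Rl \<and> x - y \<in> Rl \<and> x * y \<in> Rl" using Rl_add Rl_diff Rl_mult by blast
qed

lemma conductor_coprime:
  fixes N :: nat
  assumes N: "prime N" "N \<noteq> 2" and nD: "\<not> int N dvd (T^2 - 4*n)"
  shows "coprime (conductor Rl K) N"
proof -
  obtain a0 :: rat and f :: nat where fpos: "f > 0" and a0: "OKc T n a0 (1 / of_nat f)"
    and herm: "\<And>a b. OKc T n a b \<Longrightarrow> \<exists>q i :: int. a = of_int i + of_int q * a0 \<and> b = of_int q / of_nat f"
    using OKc_hermite[OF D0] by metis
  define \<theta> where "\<theta> = of_rat a0 + of_rat (1 / of_nat f) * \<omega>"
  have fa0: "of_nat f * a0 \<in> \<int>"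
  proof -
    have "OKc T n (of_int (int f) * a0) (of_int (int f) * (1 / of_nat f))" by (rule OKc_sc[OF a0])
    hence "OKc T n (of_nat f * a0) 1" using fpos by simp
    from OKc_diff[OF this OKc_int[of T n 0 1]] have "OKc T n (of_nat f * a0) 0" by simp
    thus ?thesis by (rule OKc_zero)
  qed
  have fth: "of_nat f * \<theta> \<in> Rl"
  proof -
    have "of_nat f * \<theta> = of_rat (of_nat f * a0) + of_rat 1 * \<omega>"
      unfolding \<theta>_def using fpos by (simp add: of_rat_mult of_rat_divide algebra_simps)
    moreover have "of_rat (of_nat f * a0) + of_rat 1 * \<omega> \<in> Rl" using rat_in_Rl[of "of_nat f * a0" 1] fa0 by simp
    ultimately show ?thesis by simp
  qed
  have jth: "of_int j * \<theta> = of_rat (of_int j * a0) + of_rat (of_int j / of_nat f) * \<omega>" for j :: int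
    unfolding \<theta>_def by (simp add: of_rat_mult of_rat_divide algebra_simps)
  define cs where "cs x = {x + y |y. y \<in> Rl}" for x
  have cs_eq: "cs x = cs x'" if "x - x' \<in> Rl" for x x'
  proof -
    have "cs x \<subseteq> cs x'" if "x - x' \<in> Rl" for x x'
    proof
      fix z assume "z \<in> cs x"
      then obtain y where "y \<in> Rl" "z = x + y" unfolding cs_def by blast
      hence "z = x' + ((x - x') + y)" "(x - x') + y \<in> Rl" using that Rl_add by auto
      thus "z \<in> cs x'" unfolding cs_def by blast
    qed
    moreover have "x' - x \<in> Rl" using Rl_diff[OF Rl_0 that] by simp
    ultimately show ?thesis using that by blast
  qed
  have cs_inj: "x - x' \<in> Rl" if "cs x = cs x'" for x x'
  proof -
    have "x \<in> cs x" unfolding cs_def using Rl_0 by force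
    hence "x \<in> cs x'" using that by simp
    then obtain y where "y \<in> Rl" "x = x' + y" unfolding cs_def by blast
    thus ?thesis by simp
  qed
  have img: "cs ` ring_of_integers K = (\<lambda>j. cs (of_nat j * \<theta>)) ` {0..<f}"
  proof (rule equalityI; rule subsetI)
    fix C assume "C \<in> cs ` ring_of_integers K"
    then obtain z where z: "z \<in> ring_of_integers K" "C = cs z" by blast
    then obtain a b where zab: "z = of_rat a + of_rat b * \<omega>" "OKc T n a b" unfolding memROI by blast
    from herm[OF zab(2)] obtain q i :: int where qi: "a = of_int i + of_int q * a0" "b = of_int q / of_nat f" by blast
    have zq: "z = of_int i + of_int q * \<theta>" unfolding zab(1) jth qi by (simp add: of_rat_add of_rat_mult)
    define r where "r = q mod int f"
    define k where "k = q div int f"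
    have r0: "0 \<le> r" "r < int f" unfolding r_def using fpos by simp_all
    have qkr: "q = k * int f + r" unfolding k_def r_def by simp
    have "z - of_int r * \<theta> = of_int i + of_int k * (of_nat f * \<theta>)"
      unfolding zq qkr by (simp add: algebra_simps)
    moreover have "(of_int k :: complex) \<in> Rl" unfolding memRl by (rule exI[of _ k], rule exI[of _ 0]) simp
    hence "of_int k * (of_nat f * \<theta>) \<in> Rl" using Rl_mult fth by blast
    moreover have "(of_int i :: complex) \<in> Rl" unfolding memRl by (rule exI[of _ i], rule exI[of _ 0]) simp
    ultimately have "z - of_int r * \<theta> \<in> Rl" using Rl_add by simp
    hence "C = cs (of_nat (nat r) * \<theta>)" using z(2) cs_eq r0 by simp
    moreover have "nat r \<in> {0..<f}" using r0 by simp
    ultimately show "C \<in> (\<lambda>j. cs (of_nat j * \<theta>)) ` {0..<f}" by blast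
  next
    fix C assume "C \<in> (\<lambda>j. cs (of_nat j * \<theta>)) ` {0..<f}"
    then obtain j where "C = cs (of_nat j * \<theta>)" by blast
    moreover have "of_nat j * \<theta> \<in> ring_of_integers K"
    proof -
      have "OKc T n (of_int (int j) * a0) (of_int (int j) * (1 / of_nat f))" by (rule OKc_sc[OF a0])
      moreover have "of_nat j * \<theta> = of_rat (of_int (int j) * a0) + of_rat (of_int (int j) * (1 / of_nat f)) * \<omega>"
        using jth[of "int j"] by simp
      ultimately show ?thesis unfolding memROI by blast
    qed
    ultimately show "C \<in> cs ` ring_of_integers K" by blast
  qed
  have inj: "inj_on (\<lambda>j. cs (of_nat j * \<theta>)) {0..<f}"
  proof (rule inj_onI)
    fix j j' assume jj: "j \<in> {0..<f}" "j' \<in> {0..<f}" "cs (of_nat j * \<theta>) = cs (of_nat j' * \<theta>)"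
    have "of_nat j * \<theta> - of_nat j' * \<theta> \<in> Rl" by (rule cs_inj[OF jj(3)])
    moreover have "of_nat j * \<theta> - of_nat j' * \<theta> = of_int (int j - int j') * \<theta>" by (simp add: algebra_simps)
    ultimately have "of_int (int j - int j') * \<theta> \<in> Rl" by simp
    hence "of_rat (of_int (int j - int j') * a0) + of_rat (of_int (int j - int j') / of_nat f) * \<omega> \<in> Rl"
      by (simp only: jth)
    hence "(of_int (int j - int j') / of_nat f :: rat) \<in> \<int>" using rat_in_Rl by blast
    then obtain u where u: "(of_int (int j - int j') / of_nat f :: rat) = of_int u" by (auto elim!: Ints_cases)
    hence "(of_int (int j - int j') :: rat) = of_int u * of_nat f" using fpos by (simp add: field_simps)
    also have "\<dots> = of_int (u * int f)" by simp
    finally have e: "int j - int j' = u * int f" by (simp only: of_int_eq_iff)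
    have "\<not> u \<ge> 1"
    proof
      assume "u \<ge> 1" hence "u * int f \<ge> 1 * int f" by (intro mult_right_mono) simp_all
      thus False using e jj(1,2) by simp
    qed
    moreover have "\<not> u \<le> -1"
    proof
      assume "u \<le> -1" hence "u * int f \<le> (-1) * int f" by (intro mult_right_mono) simp_all
      thus False using e jj(1,2) by simp
    qed
    ultimately have "u = 0" by simp
    thus "j = j'" using e by simp
  qed
  have cardf: "conductor Rl K = f"
    unfolding conductor_def cs_def[symmetric] img using card_image[OF inj] by simp
  have "\<not> N dvd f"
  proof
    assume "N dvd f"
    then obtain g where g: "f = N * g" by blast
    have Np: "N > 0" using N prime_gt_0_nat by blast
    have h: "OKc T n (of_int (int g) * a0) (of_int (int g) * (1 / of_nat f))" by (rule OKc_sc[OF a0])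
    have gf: "of_int (int g) * (1 / of_nat f) = (1 / of_nat N :: rat)" using g fpos by simp
    have "of_nat N * (of_int (int g) * a0) = of_nat f * a0" using g by simp
    hence i1: "of_nat N * (of_int (int g) * a0) \<in> \<int>" using fa0 by (simp only:)
    have i2: "of_nat N * (1 / of_nat N) \<in> (\<int> :: rat set)" using Np by simp
    from OKc_torsion[OF N nD h[unfolded gf] i1 i2] have "(1 / of_nat N :: rat) \<in> \<int>" by simp
    then obtain u where u: "(1 / of_nat N :: rat) = of_int u" by (auto elim!: Ints_cases)
    hence "1 = of_int u * (of_nat N :: rat)" using Np by (simp add: field_simps)
    also have "\<dots> = of_int (u * int N)" by simp
    finally have "(of_int 1 :: rat) = of_int (u * int N)" by simp
    hence "1 = u * int N" by (simp only: of_int_eq_iff)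
    hence "int N dvd 1" unfolding dvd_def by (intro exI[of _ u]) (simp add: mult.commute)
    hence "N dvd 1" using int_dvd_int_iff[of N 1] by simp
    thus False using N by simp
  qed
  hence "coprime N f" using N by (simp add: prime_imp_coprime)
  thus ?thesis using cardf by (simp add: coprime_commute)
qed

end



context lat begin

lemma coordL:
  assumes "of_int a * w1 + of_int b * w2 = of_int c * w1 + of_int d * w2" shows "a = c \<and> b = d"
proof -
  have "of_int (a - c) * w1 + of_int (b - d) * w2 = 0" using assms by (simp add: algebra_simps)
  from indepI[OF this] show ?thesis by simp
qed

lemma R_basis:
  assumes cR: "c \<in> R" and Imc: "Im c \<noteq> 0"
  obtains \<omega> where "\<omega> \<in> R" "Im \<omega> \<noteq> 0" "R = lattice_gen 1 \<omega>"
proof -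
  define \<tau> where "\<tau> = w2 / w1"
  have Imt: "Im \<tau> \<noteq> 0" using nondeg \<tau>_def by simp
  have tauR: "e \<in> R \<Longrightarrow> \<exists>p q :: int. e = of_int p + of_int q * \<tau>" for e
    using End_tau \<tau>_def by metis
  define S where "S j \<longleftrightarrow> 0 < j \<and> (\<exists>p::int. of_int p + of_int (int j) * \<tau> \<in> R)" for j :: nat
  obtain pc qc :: int where c: "c = of_int pc + of_int qc * \<tau>" using tauR[OF cR] by blast
  have qc0: "qc \<noteq> 0" using Imc c by auto
  have "S (nat \<bar>qc\<bar>)"
  proof (cases "qc > 0")
    case True thus ?thesis unfolding S_def using cR c by (intro conjI exI[of _ pc]) simp_all
  next
    case False
    hence "- c = of_int (- pc) + of_int (int (nat \<bar>qc\<bar>)) * \<tau>" using c by simp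
    moreover have "- c \<in> R" using End_neg[OF cR] .
    ultimately show ?thesis unfolding S_def using qc0 by (intro conjI exI[of _ "-pc"]) simp_all
  qed
  define j0 where "j0 = (LEAST j. S j)"
  have "S j0" unfolding j0_def by (rule LeastI) fact
  then obtain p0 where j0pos: "0 < j0" and p0: "of_int p0 + of_int (int j0) * \<tau> \<in> R" unfolding S_def by blast
  define \<omega> where "\<omega> = of_int p0 + of_int (int j0) * \<tau>"
  have wR: "\<omega> \<in> R" using p0 \<omega>_def by simp
  have Imw: "Im \<omega> \<noteq> 0" unfolding \<omega>_def using Imt j0pos by simp
  have "R = lattice_gen 1 \<omega>"
  proof (rule equalityI; rule subsetI)
    fix e assume eR: "e \<in> R"
    then obtain p q :: int where e: "e = of_int p + of_int q * \<tau>" using tauR by blast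
    define k where "k = q div int j0"
    define r where "r = q mod int j0"
    have r0: "0 \<le> r" "r < int j0" unfolding r_def using j0pos by simp_all
    have qkr: "q = k * int j0 + r" unfolding k_def r_def by simp
    have "e - of_int k * \<omega> = of_int (p - k * p0) + of_int r * \<tau>"
      unfolding e \<omega>_def qkr by (simp add: algebra_simps)
    moreover have "e - of_int k * \<omega> \<in> R" using End_diff[OF eR End_sc[OF wR]] .
    ultimately have h: "of_int (p - k * p0) + of_int r * \<tau> \<in> R" by simp
    have "r = 0"
    proof (rule ccontr)
      assume "r \<noteq> 0" hence "S (nat r)" unfolding S_def using r0 h by (intro conjI exI[of _ "p - k * p0"]) simp_all
      hence "j0 \<le> nat r" unfolding j0_def by (rule Least_le)
      thus False using r0 by simp
    qed
    hence "e = of_int (p - k * p0) * 1 + of_int k * \<omega>"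
      using \<open>e - of_int k * \<omega> = _\<close> by (simp add: algebra_simps)
    thus "e \<in> lattice_gen 1 \<omega>" unfolding lattice_gen_def by blast
  next
    fix e assume "e \<in> lattice_gen 1 \<omega>"
    then obtain a b :: int where "e = of_int a * 1 + of_int b * \<omega>" unfolding lattice_gen_def by blast
    thus "e \<in> R" using End_add[OF End_int End_sc[OF wR]] by simp
  qed
  thus ?thesis using that wR Imw by blast
qed

lemma not_cyclic:
  fixes g :: int
  assumes g2: "g \<ge> 2" and rR: "r \<in> R" and yL: "y \<in> L"
    and sub: "L \<subseteq> {of_int k * y + (of_int g * r) * l | k l. l \<in> L}"
  shows False
proof -
  have gL: "\<exists>u v :: int. (of_int g * r) * l = of_int (g*u) * w1 + of_int (g*v) * w2" if "l \<in> L" for l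
  proof -
    have "r * l \<in> L" using EndD[OF rR that] .
    then obtain u v :: int where "r * l = of_int u * w1 + of_int v * w2" unfolding memL by blast
    hence "(of_int g * r) * l = of_int g * (of_int u * w1 + of_int v * w2)" by (simp add: mult_ac)
    hence "(of_int g * r) * l = of_int (g*u) * w1 + of_int (g*v) * w2" by (simp add: algebra_simps)
    thus ?thesis by blast
  qed
  obtain a b :: int where y: "y = of_int a * w1 + of_int b * w2" using yL unfolding memL by blast
  obtain k1 l1 where k1: "w1 = of_int k1 * y + (of_int g * r) * l1" "l1 \<in> L" using sub Lw1 by blast
  obtain k2 l2 where k2: "w2 = of_int k2 * y + (of_int g * r) * l2" "l2 \<in> L" using sub Lw2 by blast
  obtain u1 v1 where uv1: "(of_int g * r) * l1 = of_int (g*u1) * w1 + of_int (g*v1) * w2" using gL[OF k1(2)] by blast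
  obtain u2 v2 where uv2: "(of_int g * r) * l2 = of_int (g*u2) * w1 + of_int (g*v2) * w2" using gL[OF k2(2)] by blast
  have "of_int 1 * w1 + of_int 0 * w2 = of_int (k1*a + g*u1) * w1 + of_int (k1*b + g*v1) * w2"
    using k1(1) uv1 y by (simp add: algebra_simps)
  from coordL[OF this] have e1: "1 = k1*a + g*u1" "0 = k1*b + g*v1" by auto
  have "of_int 0 * w1 + of_int 1 * w2 = of_int (k2*a + g*u2) * w1 + of_int (k2*b + g*v2) * w2"
    using k2(1) uv2 y by (simp add: algebra_simps)
  from coordL[OF this] have e2: "0 = k2*a + g*u2" "1 = k2*b + g*v2" by auto
  have A1: "k1*a = 1 - g*u1" "k1*b = - g*v1" using e1 by linarith+
  have A2: "k2*a = - g*u2" "k2*b = 1 - g*v2" using e2 by linarith+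
  have "(k1*a) * (k2*b) = (k1*b) * (k2*a)" by (simp add: algebra_simps)
  hence "(1 - g*u1) * (1 - g*v2) = (- g*v1) * (- g*u2)" unfolding A1 A2 .
  hence "1 = g * (u1 + v2 - g*u1*v2 + g*v1*u2)" by (simp add: algebra_simps)
  hence "g dvd 1" by (metis dvd_triv_left)
  thus False using g2 by (simp add: zdvd1_eq)
qed

end



lemma nonQR: "\<not> QuadRes (int N) eps \<Longrightarrow> \<not> int N dvd (y^2 - eps)"
  unfolding QuadRes_def cong_iff_dvd_diff by blast

lemma QR2: "QuadRes 2 eps"
  unfolding QuadRes_def cong_iff_dvd_diff
  by (rule exI[of _ eps]) (simp add: power2_eq_square)

lemma commutant:
  fixes N :: nat and a11 a12 a21 a22 p q r s eps :: int
  assumes N: "prime N" and nq: "\<not> QuadRes (int N) eps"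
    and h1: "int N dvd a11^2 + a12*a21 - eps"
    and c1: "int N dvd r*a21 - a12*q"
    and c2: "int N dvd q*a11 + s*a21 - a21*p - a22*q"
  shows "\<exists>a b. int N dvd (p - a - b*a11) \<and> int N dvd (q - b*a21) \<and> int N dvd (r - b*a12) \<and> int N dvd (s - a - b*a22)"
proof -
  have pN: "prime (int N)" using N by simp
  have na21: "\<not> int N dvd a21"
  proof
    assume "int N dvd a21"
    hence "int N dvd a12 * a21" by simp
    from dvd_diff[OF h1 this] have "int N dvd (a11^2 + a12*a21 - eps) - a12*a21" .
    hence "int N dvd a11^2 - eps" by simp
    thus False using nonQR[OF nq] by blast
  qed
  have "coprime (int N) a21" using prime_imp_coprime[OF pN na21] .
  hence "coprime a21 (int N)" by (simp add: coprime_commute)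
  then obtain x where x: "[a21 * x = 1] (mod int N)" using cong_solve_coprime_int by blast
  hence dx: "int N dvd a21 * x - 1" by (simp add: cong_iff_dvd_diff)
  define b where "b = x * q"
  define a where "a = p - b * a11"
  have d1: "int N dvd (p - a - b*a11)" unfolding a_def by simp
  have d2: "int N dvd (q - b*a21)"
  proof -
    have "q - b*a21 = - q * (a21 * x - 1)" unfolding b_def by (simp add: algebra_simps)
    thus ?thesis using dx by simp
  qed
  have d3: "int N dvd (r - b*a12)"
  proof -
    have "a21 * (r - b*a12) = (r*a21 - a12*q) + a12 * (q - b*a21)" by (simp add: algebra_simps)
    hence "int N dvd a21 * (r - b*a12)" using c1 d2 by simp
    thus ?thesis using na21 prime_dvd_mult_iff[OF pN] by blast
  qed
  have d4: "int N dvd (s - a - b*a22)"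
  proof -
    have "a21 * (s - a - b*a22) = (q*a11 + s*a21 - a21*p - a22*q) - (a11 - a22) * (q - b*a21)"
      unfolding a_def by (simp add: algebra_simps)
    hence "int N dvd a21 * (s - a - b*a22)" using c2 d2 by simp
    thus ?thesis using na21 prime_dvd_mult_iff[OF pN] by blast
  qed
  show ?thesis using d1 d2 d3 d4 by blast
qed

context lat begin

lemma T_add: "x \<in> torsion N L \<Longrightarrow> y \<in> torsion N L \<Longrightarrow> x + y \<in> torsion N L"
  unfolding torsion_def by (simp add: distrib_left Ladd)
lemma T_sc: "x \<in> torsion N L \<Longrightarrow> of_int k * x \<in> torsion N L"
  unfolding torsion_def using Lsc by (simp add: mult.left_commute)
lemma T_End: "e \<in> R \<Longrightarrow> x \<in> torsion N L \<Longrightarrow> e * x \<in> torsion N L"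
  unfolding torsion_def using EndD by (simp add: mult.left_commute)

lemma f_sc:
  assumes te: "is_tors_endo N L f" and x: "x \<in> torsion N L"
  shows "f (of_int k * x) - of_int k * f x \<in> L"
proof -
  have add: "f (u + v) - f u - f v \<in> L" if "u \<in> torsion N L" "v \<in> torsion N L" for u v
    using te that unfolding is_tors_endo_def by blast
  have z: "0 \<in> torsion N L" unfolding torsion_def using L0 by simp
  have f0: "f 0 \<in> L"
  proof -
    have "f (0 + 0) - f 0 - f 0 \<in> L" by (rule add[OF z z])
    hence "- (f 0) \<in> L" by simp
    from Lneg[OF this] show ?thesis by simp
  qed
  have nat: "f (of_nat j * x) - of_nat j * f x \<in> L" for j
  proof (induction j)
    case 0 thus ?case using f0 by simp
  next
    case (Suc j)
    have jx: "of_nat j * x \<in> torsion N L" using T_sc[OF x, of "int j"] by simp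
    have eq: "f (of_nat (Suc j) * x) - of_nat (Suc j) * f x = (f (of_nat j * x + x) - f (of_nat j * x) - f x) + (f (of_nat j * x) - of_nat j * f x)"
      by (simp add: algebra_simps)
    show ?case by (subst eq) (rule Ladd[OF add[OF jx x] Suc])
  qed
  show ?thesis
  proof (cases "k \<ge> 0")
    case True
    then obtain j where "k = int j" by (metis nonneg_eq_int)
    thus ?thesis using nat[of j] by simp
  next
    case False
    then obtain j where k: "k = - int j" by (metis nonneg_eq_int neg_0_le_iff_le le_cases minus_minus)
    have jx: "of_nat j * x \<in> torsion N L" using T_sc[OF x, of "int j"] by simp
    have mjx: "- (of_nat j * x) \<in> torsion N L" using T_sc[OF x, of "- int j"] by simp
    have "f (- (of_nat j * x) + of_nat j * x) - f (- (of_nat j * x)) - f (of_nat j * x) \<in> L" by (rule add[OF mjx jx])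
    hence a: "f 0 - f (- (of_nat j * x)) - f (of_nat j * x) \<in> L" by simp
    have eq: "f (of_int k * x) - of_int k * f x = - ((f 0 - f (- (of_nat j * x)) - f (of_nat j * x)) + (f (of_nat j * x) - of_nat j * f x)) + f 0"
      unfolding k by (simp add: algebra_simps)
    show ?thesis by (subst eq) (rule Ladd[OF Lneg[OF Ladd[OF a nat[of j]]] f0])
  qed
qed

lemma f_lin:
  assumes te: "is_tors_endo N L f" and Np: "N > 0"
  shows "f (Pt N x1 x2) - (of_int x1 * f (Pt N 1 0) + of_int x2 * f (Pt N 0 1)) \<in> L"
proof -
  have add: "f (u + v) - f u - f v \<in> L" if "u \<in> torsion N L" "v \<in> torsion N L" for u v
    using te that unfolding is_tors_endo_def by blast
  have t1: "Pt N 1 0 \<in> torsion N L" and t2: "Pt N 0 1 \<in> torsion N L" using torsion_iff[OF Np] by blast+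
  have u1: "of_int x1 * Pt N 1 0 \<in> torsion N L" using T_sc[OF t1] .
  have u2: "of_int x2 * Pt N 0 1 \<in> torsion N L" using T_sc[OF t2] .
  have "f (Pt N x1 x2) - (of_int x1 * f (Pt N 1 0) + of_int x2 * f (Pt N 0 1))
     = (f (of_int x1 * Pt N 1 0 + of_int x2 * Pt N 0 1) - f (of_int x1 * Pt N 1 0) - f (of_int x2 * Pt N 0 1))
       + (f (of_int x1 * Pt N 1 0) - of_int x1 * f (Pt N 1 0)) + (f (of_int x2 * Pt N 0 1) - of_int x2 * f (Pt N 0 1))"
    by (subst Pt_lin) (simp add: algebra_simps)
  thus ?thesis using Ladd[OF Ladd[OF add[OF u1 u2] f_sc[OF te t1]] f_sc[OF te t2]] by (simp only:)
qed

end

lemma hecke_m1: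
  assumes "ns_structure N eps L f" shows "hecke_corr N eps 1 L f L f"
proof -
  obtain w1 w2 where nd: "Im (w2/w1) \<noteq> 0" and L: "L = lattice_gen w1 w2"
    using assms unfolding ns_structure_def is_lattice_def by blast
  interpret lat w1 w2 using nd by unfold_locales
  have te: "is_tors_endo N L f" using assms unfolding ns_structure_def by blast
  have iso: "ns_iso N L f L f" unfolding ns_iso_def
    by (rule exI[of _ 1]) (simp add: L L0)
  have cq: "cyclic_quotient 1 L L" unfolding cyclic_quotient_def
  proof (rule exI[of _ 0], intro conjI)
    show "of_nat 1 * 0 \<in> L" using L L0 by simp
    show "\<forall>k::nat. 0 < k \<and> k < 1 \<longrightarrow> of_nat k * 0 \<notin> L" by simp
    show "L = {of_int k * 0 + l |k l. l \<in> L}" by auto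
  qed
  have "\<forall>x\<in>torsion N L. f x - f x \<in> L" using L L0 by simp
  thus ?thesis unfolding hecke_corr_def using assms iso cq te by blast
qed




context lat begin

lemma cPt:
  assumes "c * w1 = of_int p * w1 + of_int q * w2" "c * w2 = of_int r * w1 + of_int s * w2"
  shows "c * Pt N x1 x2 = Pt N (x1*p + x2*r) (x1*q + x2*s)"
proof -
  have "c * (of_int x1 * w1 + of_int x2 * w2) = of_int x1 * (c * w1) + of_int x2 * (c * w2)" by (simp add: algebra_simps)
  also have "\<dots> = of_int (x1*p + x2*r) * w1 + of_int (x1*q + x2*s) * w2" unfolding assms by (simp add: algebra_simps)
  finally show ?thesis unfolding Pt_def by (simp add: divide_inverse mult.assoc[symmetric])
qed

lemma prim_real:
  assumes cR: "c \<in> R" and Imc: "Im c = 0" and c0: "c \<noteq> 0" and yL: "y \<in> L"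
    and sub: "L \<subseteq> {of_int k * y + c * l | k l. l \<in> L}"
  shows "c = 1 \<or> c = -1"
proof -
  obtain k where k: "c = of_int k" using End_real_int[OF cR Imc] by blast
  have "\<not> \<bar>k\<bar> \<ge> 2"
  proof
    assume g2: "\<bar>k\<bar> \<ge> 2"
    have ck: "c = of_int \<bar>k\<bar> * of_int (sgn k)" unfolding k by (metis abs_mult_sgn of_int_mult)
    show False
      by (rule not_cyclic[OF g2 End_int yL]) (use sub ck in simp)
  qed
  moreover have "k \<noteq> 0" using c0 k by simp
  ultimately have "k = 1 \<or> k = -1" by auto
  thus ?thesis using k by auto
qed

lemma prim_div:
  assumes yL: "y \<in> L" and sub: "L \<subseteq> {of_int k * y + c * l | k l. l \<in> L}" and g2: "g \<ge> 2"
  shows "c / of_int g \<notin> R"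
proof
  assume h: "c / of_int g \<in> R"
  have "c = of_int g * (c / of_int g)" using g2 by simp
  hence "L \<subseteq> {of_int k * y + (of_int g * (c / of_int g)) * l | k l. l \<in> L}" using sub by simp
  from not_cyclic[OF g2 h yL this] show False .
qed

lemma norm_bound:
  assumes cR: "c \<in> R" and Imc: "Im c \<noteq> 0" and yL: "y \<in> L"
    and sub: "L \<subseteq> {of_int k * y + c * l | k l. l \<in> L}" and mc: "of_nat m / c \<in> R"
    and cn: "c * cnj c = of_int nc" and m0: "m > 0"
  shows "nc \<le> int m"
proof -
  have c0: "c \<noteq> 0" using Imc by auto
  have "c * cnj c = of_real ((Re c)^2 + (Im c)^2)" by (rule complex_mult_cnj)
  hence "of_int nc = (of_real ((Re c)^2 + (Im c)^2) :: complex)" using cn by simp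
  hence "real_of_int nc = (Re c)^2 + (Im c)^2" by (metis of_real_eq_iff of_real_of_int_eq)
  moreover have "(Im c)^2 > 0" using Imc by simp
  ultimately have "real_of_int nc > 0" by (simp add: add_nonneg_pos)
  hence ncpos: "nc > 0" by simp
  define d where "d = gcd (int m) nc"
  obtain u v where uv: "u * int m + v * nc = d" using bezout_int unfolding d_def by blast
  have dpos: "d > 0" unfolding d_def using ncpos by simp
  have ddvd: "d dvd nc" unfolding d_def by simp
  then obtain g where g: "nc = d * g" by blast
  have gpos: "g > 0" using g ncpos dpos by (simp add: zero_less_mult_iff)
  have inv: "1 / c = cnj c / of_int nc" using cn c0 ncpos by (simp add: field_simps)
  have mc': "of_nat m / c = of_nat m * (cnj c / of_int nc)" using inv by (metis times_divide_eq_right mult_1_right)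
  have ncz: "(of_int nc :: complex) \<noteq> 0" using ncpos by simp
  have "of_int u * (of_nat m / c) + of_int v * cnj c = (of_int (u * int m + v * nc) / of_int nc) * cnj c"
    unfolding mc' using ncz by (simp add: field_simps)
  also have "\<dots> = cnj c / of_int g" unfolding uv using g dpos gpos by (simp add: field_simps)
  finally have e: "of_int u * (of_nat m / c) + of_int v * cnj c = cnj c / of_int g" .
  have "cnj c / of_int g \<in> R" unfolding e[symmetric] using End_add[OF End_sc[OF mc] End_sc[OF End_cnj[OF cR]]] .
  from End_cnj[OF this] have "c / of_int g \<in> R" by simp
  hence "\<not> g \<ge> 2" using prim_div[OF yL sub] by blast
  hence "g = 1" using gpos by simp
  hence "nc = d" using g by simp
  hence "nc dvd int m" unfolding d_def using gcd_dvd1[of "int m" nc] by simp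
  moreover have "int m > 0" using m0 by simp
  ultimately show ?thesis by (rule zdvd_imp_le)
qed

end



context lat begin

lemma Im_bound:
  assumes bR: "\<beta> \<in> R" and Imb: "Im \<beta> \<noteq> 0" shows "(Im \<beta>)^2 \<ge> 1/4"
proof -
  obtain Tb nb where ch: "\<beta>^2 = of_int Tb * \<beta> - of_int nb" using End_charpoly[OF bR] by blast
  note v = vieta[OF Imb ch]
  have "\<beta> + cnj \<beta> = of_real (2 * Re \<beta>)" by (simp add: complex_eq_iff)
  hence re: "2 * Re \<beta> = of_int Tb" using v(1) by (metis of_real_eq_iff of_real_of_int_eq)
  have "\<beta> * cnj \<beta> = of_real ((Re \<beta>)^2 + (Im \<beta>)^2)" by (rule complex_mult_cnj)
  hence nb: "(Re \<beta>)^2 + (Im \<beta>)^2 = of_int nb" using v(2) by (metis of_real_eq_iff of_real_of_int_eq)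
  have "4 * (Im \<beta>)^2 = of_int (4*nb - Tb^2)"
  proof -
    have "4 * (Im \<beta>)^2 = 4 * ((Re \<beta>)^2 + (Im \<beta>)^2) - (2 * Re \<beta>)^2" by (simp add: power2_eq_square)
    thus ?thesis unfolding nb re by simp
  qed
  moreover have "(Im \<beta>)^2 > 0" using Imb by simp
  ultimately have "real_of_int (4*nb - Tb^2) > 0" by linarith
  hence "4*nb - Tb^2 > 0" by (simp only: of_int_0_less_iff)
  hence "4*nb - Tb^2 \<ge> 1" by simp
  hence "real_of_int (4*nb - Tb^2) \<ge> 1" by linarith
  with \<open>4 * (Im \<beta>)^2 = _\<close> show ?thesis by simp
qed


lemma finish:
  fixes N :: nat and eps :: int
  assumes N: "prime N" and nq: "\<not> QuadRes (int N) eps"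
    and te: "is_tors_endo N L f" and sq: "\<forall>x\<in>torsion N L. f (f x) - of_int eps * x \<in> L"
    and cR: "c \<in> R" and Imc: "Im c \<noteq> 0" and aR: "\<alpha> \<in> R"
    and fa: "\<forall>x\<in>torsion N L. f x - \<alpha> * x \<in> L"
  shows "heegner N L f"
proof -
  have Np: "N > 0" using N prime_gt_0_nat by blast
  have pN: "prime (int N)" using N by simp
  obtain \<omega> where wR: "\<omega> \<in> R" and Imw: "Im \<omega> \<noteq> 0" and Req: "R = lattice_gen 1 \<omega>"
    using R_basis[OF cR Imc] by blast
  obtain T n where wsq: "\<omega>^2 = of_int T * \<omega> - of_int n" using End_charpoly[OF wR] by blast
  interpret Q: qord \<omega> T n using Imw wsq by unfold_locales
  have N2: "N \<noteq> 2" using nq QR2 by auto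
  have ft: "f x \<in> torsion N L" if "x \<in> torsion N L" for x using te that unfolding is_tors_endo_def by blast
  have fresp: "f x - f x' \<in> L" if "x \<in> torsion N L" "x' \<in> torsion N L" "x - x' \<in> L" for x x'
    using te that unfolding is_tors_endo_def by blast
  have sq2: "(\<alpha>^2 - of_int eps) * x \<in> L" if xT: "x \<in> torsion N L" for x
  proof -
    have ax: "\<alpha> * x \<in> torsion N L" by (rule T_End[OF aR xT])
    have A: "\<alpha> * (\<alpha> * x) - f (\<alpha> * x) \<in> L" using Lneg[OF bspec[OF fa ax]] by simp
    have "\<alpha> * x - f x \<in> L" using Lneg[OF bspec[OF fa xT]] by simp
    hence B: "f (\<alpha> * x) - f (f x) \<in> L" by (rule fresp[OF ax ft[OF xT]])
    have C: "f (f x) - of_int eps * x \<in> L" using sq xT by blast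
    have "(\<alpha>^2 - of_int eps) * x = (\<alpha> * (\<alpha> * x) - f (\<alpha> * x)) + (f (\<alpha> * x) - f (f x)) + (f (f x) - of_int eps * x)"
      by (simp add: algebra_simps power2_eq_square)
    thus ?thesis using Ladd[OF Ladd[OF A B] C] by simp
  qed
  have "(\<alpha>^2 - of_int eps) / of_nat N \<in> R" by (rule End_Ldiv[OF Np sq2])
  then obtain u v :: int where uv: "(\<alpha>^2 - of_int eps) / of_nat N = of_int u + of_int v * \<omega>"
    unfolding Req Q.memRl by blast
  obtain i0 j0 :: int where a: "\<alpha> = of_int i0 + of_int j0 * \<omega>" using aR unfolding Req Q.memRl by blast
  have "\<alpha>^2 - of_int eps = of_nat N * (of_int u + of_int v * \<omega>)" using uv Np by (simp add: field_simps)
  moreover have "\<alpha>^2 = of_int (i0^2 - j0^2*n) + of_int (2*i0*j0 + j0^2*T) * \<omega>"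
  proof -
    have "\<alpha>^2 = of_int i0 ^ 2 + 2 * of_int i0 * of_int j0 * \<omega> + of_int j0 ^ 2 * \<omega>^2"
      unfolding a by (simp add: power2_eq_square algebra_simps)
    also have "\<dots> = of_int (i0^2 - j0^2*n) + of_int (2*i0*j0 + j0^2*T) * \<omega>" unfolding wsq by (simp add: algebra_simps)
    finally show ?thesis .
  qed
  ultimately have "of_int (i0^2 - j0^2*n - eps - int N * u) + of_int (2*i0*j0 + j0^2*T - int N * v) * \<omega> = 0"
    by (simp add: algebra_simps)
  from indep_int[OF Imw this] have e1: "i0^2 - j0^2*n - eps = int N * u" and e2: "2*i0*j0 + j0^2*T = int N * v" by auto
  have nj: "\<not> int N dvd j0"
  proof
    assume "int N dvd j0"
    hence "int N dvd j0^2 * n" by (simp add: power2_eq_square)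
    moreover have "int N dvd i0^2 - j0^2*n - eps" using e1 by simp
    ultimately have "int N dvd (i0^2 - j0^2*n - eps) + j0^2 * n" by (rule dvd_add[rotated])
    hence "int N dvd i0^2 - eps" by simp
    thus False using nonQR[OF nq] by blast
  qed
  have "int N dvd j0 * (2*i0 + j0*T)" using e2 by (simp add: algebra_simps power2_eq_square)
  hence d2: "int N dvd 2*i0 + j0*T" using nj prime_dvd_mult_iff[OF pN] by blast
  have nD: "\<not> int N dvd (T^2 - 4*n)"
  proof
    assume dD: "int N dvd (T^2 - 4*n)"
    have "4 * (i0^2 - j0^2*n) = (2*i0 + j0*T) * (2*i0 - j0*T) + j0^2 * (T^2 - 4*n)" by (simp add: algebra_simps power2_eq_square)
    moreover have "int N dvd (2*i0 + j0*T) * (2*i0 - j0*T)" using d2 by simp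
    moreover have "int N dvd j0^2 * (T^2 - 4*n)" using dD by simp
    ultimately have "int N dvd 4 * (i0^2 - j0^2*n)" by (simp add: dvd_add)
    hence "int N dvd 4 * (int N * u + eps)" using e1 by (simp add: algebra_simps)
    hence "int N dvd 4 * (int N * u) + 4 * eps" by (simp add: algebra_simps)
    hence "int N dvd 4 * eps" by (simp add: dvd_add_right_iff)
    hence "int N dvd 2 * (2 * eps)" by simp
    moreover have n2: "\<not> int N dvd 2"
    proof
      assume "int N dvd 2" hence "N dvd 2" using int_dvd_int_iff[of N 2] by simp
      hence "N \<le> 2" by (simp add: dvd_imp_le)
      thus False using N N2 prime_ge_2_nat[of N] by simp
    qed
    ultimately have "int N dvd 2 * eps" using prime_dvd_mult_iff[OF pN] by blast
    hence "int N dvd eps" using n2 prime_dvd_mult_iff[OF pN] by blast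
    hence "int N dvd 0^2 - eps" by simp
    thus False using nonQR[OF nq] by blast
  qed
  have cop: "coprime (conductor Q.Rl Q.K) N" by (rule Q.conductor_coprime[OF N N2 nD])
  show ?thesis unfolding heegner_def
  proof (intro conjI)
    show "\<exists>\<tau>. imag_quad \<tau> \<and> is_order R (quad_field \<tau>) \<and> coprime (conductor R (quad_field \<tau>)) N"
      using Q.imag_quad_w Q.is_order_Rl cop Req by auto
    show "\<exists>\<alpha>\<in>R. \<forall>x\<in>torsion N L. f x - \<alpha> * x \<in> L" using aR fa by blast
  qed
qed

lemma core_nonreal:
  fixes N m :: nat and eps :: int
  assumes N: "prime N" and nq: "\<not> QuadRes (int N) eps" and m0: "m > 0"
    and mN: "real m < real N ^ 2 / 4"
    and te: "is_tors_endo N L f" and sq: "\<forall>x\<in>torsion N L. f (f x) - of_int eps * x \<in> L"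
    and cR: "c \<in> R" and Imc: "Im c \<noteq> 0" and comm: "\<forall>x\<in>torsion N L. c * f x - f (c * x) \<in> L"
    and mc: "of_nat m / c \<in> R" and yL: "y \<in> L" and sub: "L \<subseteq> {of_int k * y + c * l | k l. l \<in> L}"
  shows "heegner N L f"
proof -
  have Np: "N > 0" using N prime_gt_0_nat by blast
  have pN: "prime (int N)" using N by simp
  obtain Tc nc where chc: "c^2 = of_int Tc * c - of_int nc" using End_charpoly[OF cR] by blast
  note vc = vieta[OF Imc chc]
  have ncm: "nc \<le> int m" by (rule norm_bound[OF cR Imc yL sub mc vc(2) m0])
  obtain p q r s :: int where cw1: "c * w1 = of_int p * w1 + of_int q * w2" and cw2: "c * w2 = of_int r * w1 + of_int s * w2"
    using End_coords[OF cR] by blast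
  note cP = cPt[OF cw1 cw2]
  define P10 where "P10 = Pt N 1 0"
  define P01 where "P01 = Pt N 0 1"
  have t10: "P10 \<in> torsion N L" and t01: "P01 \<in> torsion N L" unfolding P10_def P01_def using torsion_iff[OF Np] by blast+
  have ft: "f x \<in> torsion N L" if "x \<in> torsion N L" for x using te that unfolding is_tors_endo_def by blast
  have fresp: "f x - f x' \<in> L" if "x \<in> torsion N L" "x' \<in> torsion N L" "x - x' \<in> L" for x x'
    using te that unfolding is_tors_endo_def by blast
  obtain a11 a21 where fa1: "f P10 = Pt N a11 a21" using ft[OF t10] torsion_iff[OF Np] by blast
  obtain a12 a22 where fa2: "f P01 = Pt N a12 a22" using ft[OF t01] torsion_iff[OF Np] by blast
  have flin: "f (Pt N x1 x2) - (of_int x1 * f P10 + of_int x2 * f P01) \<in> L" for x1 x2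
    using f_lin[OF te Np] unfolding P10_def P01_def .
  have h1: "int N dvd a11^2 + a12*a21 - eps"
  proof -
    have X: "f (f P10) - of_int eps * P10 \<in> L" using sq t10 by blast
    have Y: "f (Pt N a11 a21) - (of_int a11 * f P10 + of_int a21 * f P01) \<in> L" by (rule flin)
    have "(f (f P10) - of_int eps * P10) - (f (Pt N a11 a21) - (of_int a11 * f P10 + of_int a21 * f P01))
       = of_int a11 * Pt N a11 a21 + of_int a21 * Pt N a12 a22 - of_int eps * Pt N 1 0"
      unfolding fa1 fa2 unfolding P10_def by simp
    also have "\<dots> = Pt N (a11*a11 + a21*a12 - eps) (a11*a21 + a21*a22)"
      unfolding Pt_def by (simp add: divide_inverse algebra_simps)
    finally have "(f (f P10) - of_int eps * P10) - (f (Pt N a11 a21) - (of_int a11 * f P10 + of_int a21 * f P01))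
       = Pt N (a11*a11 + a21*a12 - eps) (a11*a21 + a21*a22)" .
    hence "Pt N (a11*a11 + a21*a12 - eps) (a11*a21 + a21*a22) \<in> L" using Ldiff[OF X Y] by simp
    thus ?thesis using Pt_in_L[OF Np] by (simp add: power2_eq_square algebra_simps)
  qed
  have cc: "int N dvd r*a21 - a12*q \<and> int N dvd q*a11 + s*a21 - a21*p - a22*q"
  proof -
    have X: "c * f P10 - f (c * P10) \<in> L" using comm t10 by blast
    have cP10: "c * P10 = Pt N p q" unfolding P10_def cP by simp
    have Y: "f (Pt N p q) - (of_int p * f P10 + of_int q * f P01) \<in> L" by (rule flin)
    have "(c * f P10 - f (c * P10)) + (f (Pt N p q) - (of_int p * f P10 + of_int q * f P01))
        = Pt N (a11*p + a21*r - p*a11 - q*a12) (a11*q + a21*s - p*a21 - q*a22)"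
      unfolding cP10 unfolding fa1 fa2 unfolding cP unfolding Pt_def by (simp add: divide_inverse algebra_simps)
    hence "Pt N (a11*p + a21*r - p*a11 - q*a12) (a11*q + a21*s - p*a21 - q*a22) \<in> L" using Ladd[OF X Y] by simp
    hence "int N dvd (a11*p + a21*r - p*a11 - q*a12) \<and> int N dvd (a11*q + a21*s - p*a21 - q*a22)"
      using Pt_in_L[OF Np] by blast
    thus ?thesis by (simp add: algebra_simps)
  qed
  obtain a b where ab: "int N dvd (p - a - b*a11)" "int N dvd (q - b*a21)" "int N dvd (r - b*a12)" "int N dvd (s - a - b*a22)"
    using commutant[OF N nq h1 conjunct1[OF cc] conjunct2[OF cc]] by blast
  show ?thesis
  proof (cases "int N dvd b")
    case True
    have dq: "int N dvd q" using dvd_add[OF ab(2) dvd_mult2[OF True, of a21]] by simp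
    have dr: "int N dvd r" using dvd_add[OF ab(3) dvd_mult2[OF True, of a12]] by simp
    have dp: "int N dvd p - a" using dvd_add[OF ab(1) dvd_mult2[OF True, of a11]] by simp
    have ds: "int N dvd s - a" using dvd_add[OF ab(4) dvd_mult2[OF True, of a22]] by simp
    define \<beta> where "\<beta> = (c - of_int a) / of_nat N"
    have bR: "\<beta> \<in> R" unfolding End_iff
    proof
      have "(c - of_int a) * w1 = of_int (p - a) * w1 + of_int q * w2" using cw1 by (simp add: algebra_simps)
      hence "\<beta> * w1 = Pt N (p - a) q" unfolding \<beta>_def Pt_def by (simp add: divide_inverse mult_ac)
      thus "\<beta> * w1 \<in> L" using Pt_in_L[OF Np] dp dq by simp
      have "(c - of_int a) * w2 = of_int r * w1 + of_int (s - a) * w2" using cw2 by (simp add: algebra_simps)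
      hence "\<beta> * w2 = Pt N r (s - a)" unfolding \<beta>_def Pt_def by (simp add: divide_inverse mult_ac)
      thus "\<beta> * w2 \<in> L" using Pt_in_L[OF Np] dr ds by simp
    qed
    have Imb: "Im \<beta> = Im c / real N" unfolding \<beta>_def by (simp add: Im_divide_of_nat)
    hence Imb0: "Im \<beta> \<noteq> 0" using Imc Np by simp
    have b4: "(Im \<beta>)^2 \<ge> 1/4" by (rule Im_bound[OF bR Imb0])
    have "(Im c)^2 = real N ^ 2 * (Im \<beta>)^2" unfolding Imb using Np by (simp add: power_divide)
    also have "\<dots> \<ge> real N ^ 2 * (1/4)" using b4 by (intro mult_left_mono) simp_all
    finally have ic: "(Im c)^2 \<ge> real N ^ 2 / 4" by simp
    have "c * cnj c = of_real ((Re c)^2 + (Im c)^2)" by (rule complex_mult_cnj)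
    hence "of_int nc = (of_real ((Re c)^2 + (Im c)^2) :: complex)" using vc(2) by simp
    hence "real_of_int nc = (Re c)^2 + (Im c)^2" by (metis of_real_eq_iff of_real_of_int_eq)
    hence "real_of_int nc \<ge> (Im c)^2" by simp
    moreover have "real_of_int nc \<le> real m" using ncm by linarith
    ultimately show ?thesis using ic mN by linarith
  next
    case False
    have "coprime (int N) b" using prime_imp_coprime[OF pN False] .
    hence "coprime b (int N)" by (simp add: coprime_commute)
    then obtain b' where "[b * b' = 1] (mod int N)" using cong_solve_coprime_int by blast
    hence bb: "int N dvd b * b' - 1" by (simp add: cong_iff_dvd_diff)
    define \<alpha> where "\<alpha> = of_int b' * (c - of_int a)"
    have aR: "\<alpha> \<in> R" unfolding \<alpha>_def by (intro End_sc End_diff[OF cR End_int])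
    have aw1: "\<alpha> * w1 = of_int (b' * (p - a)) * w1 + of_int (b' * q) * w2" unfolding \<alpha>_def
    proof -
      have "of_int b' * (c - of_int a) * w1 = of_int b' * (c * w1 - of_int a * w1)" by (simp add: algebra_simps)
      also have "\<dots> = of_int (b' * (p - a)) * w1 + of_int (b' * q) * w2" unfolding cw1 by (simp add: algebra_simps)
      finally show "of_int b' * (c - of_int a) * w1 = of_int (b' * (p - a)) * w1 + of_int (b' * q) * w2" .
    qed
    have aw2: "\<alpha> * w2 = of_int (b' * r) * w1 + of_int (b' * (s - a)) * w2" unfolding \<alpha>_def
    proof -
      have "of_int b' * (c - of_int a) * w2 = of_int b' * (c * w2 - of_int a * w2)" by (simp add: algebra_simps)
      also have "\<dots> = of_int (b' * r) * w1 + of_int (b' * (s - a)) * w2" unfolding cw2 by (simp add: algebra_simps)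
      finally show "of_int b' * (c - of_int a) * w2 = of_int (b' * r) * w1 + of_int (b' * (s - a)) * w2" .
    qed
    note aP = cPt[OF aw1 aw2]
    have k1: "int N dvd a11 - b' * (p - a)"
    proof -
      have "a11 - b' * (p - a) = - (b' * (p - a - b*a11) + a11 * (b * b' - 1))" by (simp add: algebra_simps)
      thus ?thesis using ab(1) bb by (simp only:) (simp add: dvd_add)
    qed
    have k2: "int N dvd a21 - b' * q"
    proof -
      have "a21 - b' * q = - (b' * (q - b*a21) + a21 * (b * b' - 1))" by (simp add: algebra_simps)
      thus ?thesis using ab(2) bb by (simp only:) (simp add: dvd_add)
    qed
    have k3: "int N dvd a12 - b' * r"
    proof -
      have "a12 - b' * r = - (b' * (r - b*a12) + a12 * (b * b' - 1))" by (simp add: algebra_simps)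
      thus ?thesis using ab(3) bb by (simp only:) (simp add: dvd_add)
    qed
    have k4: "int N dvd a22 - b' * (s - a)"
    proof -
      have "a22 - b' * (s - a) = - (b' * (s - a - b*a22) + a22 * (b * b' - 1))" by (simp add: algebra_simps)
      thus ?thesis using ab(4) bb by (simp only:) (simp add: dvd_add)
    qed
    have fa: "\<forall>x\<in>torsion N L. f x - \<alpha> * x \<in> L"
    proof
      fix x assume "x \<in> torsion N L"
      then obtain x1 x2 where x: "x = Pt N x1 x2" using torsion_iff[OF Np] by blast
      have "of_int x1 * f P10 + of_int x2 * f P01 - \<alpha> * x
         = Pt N (x1 * (a11 - b' * (p - a)) + x2 * (a12 - b' * r)) (x1 * (a21 - b' * q) + x2 * (a22 - b' * (s - a)))"
        unfolding fa1 fa2 x aP unfolding Pt_def by (simp add: divide_inverse algebra_simps)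
      moreover have "Pt N (x1 * (a11 - b' * (p - a)) + x2 * (a12 - b' * r)) (x1 * (a21 - b' * q) + x2 * (a22 - b' * (s - a))) \<in> L"
        using Pt_in_L[OF Np] k1 k2 k3 k4 by (simp add: dvd_add)
      ultimately have "of_int x1 * f P10 + of_int x2 * f P01 - \<alpha> * x \<in> L" by simp
      from Ladd[OF flin[of x1 x2] this] show "f x - \<alpha> * x \<in> L" unfolding x by simp
    qed
    show ?thesis by (rule finish[OF N nq te sq cR Imc aR fa])
  qed
qed

end



lemma main_lat:
  fixes N m :: nat and eps :: int and f :: "complex \<Rightarrow> complex"
  assumes lt: "lat w1 w2"
    and N: "prime N" and nq: "\<not> QuadRes (int N) eps" and m0: "0 < m"
    and mN: "real m < real N ^ 2 / 4"
    and h6: "\<not> (\<forall>L' f'. ns_structure N eps L' f' \<longrightarrow> hecke_corr N eps m L' f' L' f')"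
    and ns: "ns_structure N eps (lattice_gen w1 w2) f"
    and hc: "hecke_corr N eps m (lattice_gen w1 w2) f (lattice_gen w1 w2) f"
  shows "heegner N (lattice_gen w1 w2) f"
proof -
  interpret lat w1 w2 by (rule lt)
  have Np: "N > 0" using N prime_gt_0_nat by blast
  have te: "is_tors_endo N L f" and sq: "\<forall>x\<in>torsion N L. f (f x) - of_int eps * x \<in> L"
    using ns unfolding ns_structure_def by blast+
  from hc obtain L0 f0 L' f' where H2: "ns_iso N L0 f0 L f" and H3: "cyclic_quotient m L0 L'"
    and H5: "\<forall>x\<in>torsion N L0. f' x - f0 x \<in> L'" and H6: "ns_iso N L' f' L f"
    unfolding hecke_corr_def by blast
  from H2 obtain c1 where c10: "c1 \<noteq> 0" and img1: "(\<lambda>z. c1 * z) ` L0 = L"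
    and iso1: "\<forall>x\<in>torsion N L0. c1 * f0 x - f (c1 * x) \<in> L" unfolding ns_iso_def by blast
  from H6 obtain c2 where c20: "c2 \<noteq> 0" and img2: "(\<lambda>z. c2 * z) ` L' = L"
    and iso2: "\<forall>x\<in>torsion N L'. c2 * f' x - f (c2 * x) \<in> L" unfolding ns_iso_def by blast
  from H3 obtain z where mz: "of_nat m * z \<in> L0" and nz: "\<forall>k::nat. 0 < k \<and> k < m \<longrightarrow> of_nat k * z \<notin> L0"
    and L'eq: "L' = {of_int k * z + l |k l. l \<in> L0}" unfolding cyclic_quotient_def by blast
  have L0iff: "y \<in> L0 \<longleftrightarrow> c1 * y \<in> L" for y
  proof
    assume "y \<in> L0" thus "c1 * y \<in> L" using img1 by blast
  next
    assume "c1 * y \<in> L"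
    hence "c1 * y \<in> (\<lambda>z. c1 * z) ` L0" using img1 by simp
    then obtain y' where "y' \<in> L0" "c1 * y = c1 * y'" by blast
    thus "y \<in> L0" using c10 by simp
  qed
  have L0_0: "0 \<in> L0" using L0iff L0 by simp
  have L0_add: "x \<in> L0 \<Longrightarrow> y \<in> L0 \<Longrightarrow> x + y \<in> L0" for x y using L0iff Ladd by (simp add: distrib_left)
  have L0_sc: "x \<in> L0 \<Longrightarrow> of_int k * x \<in> L0" for x k
  proof -
    assume "x \<in> L0" hence "c1 * x \<in> L" using L0iff by simp
    hence "of_int k * (c1 * x) \<in> L" by (rule Lsc)
    hence "c1 * (of_int k * x) \<in> L" by (simp add: mult.left_commute)
    thus ?thesis using L0iff by simp
  qed
  have L0_neg: "x \<in> L0 \<Longrightarrow> - x \<in> L0" for x using L0_sc[of x "-1"] by simp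
  have L'iff: "x \<in> L' \<longleftrightarrow> (\<exists>k l. x = of_int k * z + l \<and> l \<in> L0)" for x using L'eq by blast
  have L0L': "x \<in> L0 \<Longrightarrow> x \<in> L'" for x unfolding L'iff by (rule exI[of _ 0]) auto
  have L'neg: "x \<in> L' \<Longrightarrow> - x \<in> L'" for x
  proof -
    assume "x \<in> L'"
    then obtain k l where kl: "x = of_int k * z + l" "l \<in> L0" using L'iff by blast
    have "- x = of_int (- k) * z + (- l)" unfolding kl by simp
    thus "- x \<in> L'" unfolding L'iff using L0_neg[OF kl(2)] by blast
  qed
  have c2L: "x \<in> L' \<Longrightarrow> c2 * x \<in> L" for x using img2 by blast
  define c where "c = c2 / c1"
  have cc1: "c * c1 = c2" unfolding c_def using c10 by simp
  have c0: "c \<noteq> 0" unfolding c_def using c10 c20 by simp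
  have cR: "c \<in> R" unfolding End_ring_def
  proof (rule CollectI, rule subsetI)
    fix u assume "u \<in> (\<lambda>x. c * x) ` L"
    then obtain x where x: "x \<in> L" "u = c * x" by blast
    then obtain y where y: "y \<in> L0" "x = c1 * y" using img1 by blast
    have "u = c2 * y" using x(2) y(2) cc1 by (simp add: mult.assoc[symmetric])
    thus "u \<in> L" using c2L[OF L0L'[OF y(1)]] by simp
  qed
  have comm: "\<forall>x\<in>torsion N L. c * f x - f (c * x) \<in> L"
  proof
    fix x assume xT: "x \<in> torsion N L"
    define y where "y = x / c1"
    have xy: "x = c1 * y" unfolding y_def using c10 by simp
    have "of_nat N * x \<in> L" using xT unfolding torsion_def by simp
    hence "c1 * (of_nat N * y) \<in> L" unfolding xy by (simp add: mult.left_commute)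
    hence "of_nat N * y \<in> L0" using L0iff by simp
    hence y0: "y \<in> torsion N L0" and y': "y \<in> torsion N L'" unfolding torsion_def using L0L' by auto
    have e1: "c1 * f0 y - f (c1 * y) \<in> L" using iso1 y0 by blast
    have e2: "f' y - f0 y \<in> L'" using H5 y0 by blast
    have e3: "c2 * f' y - f (c2 * y) \<in> L" using iso2 y' by blast
    have A: "c * (c1 * f0 y - f (c1 * y)) \<in> L" by (rule EndD[OF cR e1])
    have B: "c2 * (- (f' y - f0 y)) \<in> L" by (rule c2L[OF L'neg[OF e2]])
    have "c * f x - f (c * x) = - (c * (c1 * f0 y - f (c1 * y))) + c2 * (- (f' y - f0 y)) + (c2 * f' y - f (c2 * y))"
      unfolding xy using cc1 by (simp add: algebra_simps mult.assoc[symmetric])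
    thus "c * f x - f (c * x) \<in> L" using Ladd[OF Ladd[OF Lneg[OF A] B] e3] by simp
  qed
  have mc: "of_nat m / c \<in> R" unfolding End_ring_def
  proof (rule CollectI, rule subsetI)
    fix u assume "u \<in> (\<lambda>x. of_nat m / c * x) ` L"
    then obtain x where x: "x \<in> L" "u = of_nat m / c * x" by blast
    then obtain y where y: "y \<in> L'" "x = c2 * y" using img2 by blast
    then obtain k l where kl: "y = of_int k * z + l" "l \<in> L0" using L'iff by blast
    have eq: "of_nat m * y = of_int k * (of_nat m * z) + of_int (int m) * l" unfolding kl by (simp add: algebra_simps)
    have mem: "of_int k * (of_nat m * z) + of_int (int m) * l \<in> L0" using L0_add[OF L0_sc[OF mz] L0_sc[OF kl(2)]] .
    have my: "of_nat m * y \<in> L0" by (subst eq) (rule mem)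
    have "u = c1 * (of_nat m * y)" unfolding x(2) y(2) c_def using c10 c20 by (simp add: field_simps)
    thus "u \<in> L" using my L0iff by simp
  qed
  have zL': "z \<in> L'" unfolding L'iff by (rule exI[of _ 1], rule exI[of _ 0]) (simp add: L0_0)
  define y0 where "y0 = c2 * z"
  have y0L: "y0 \<in> L" unfolding y0_def by (rule c2L[OF zL'])
  have sub: "L \<subseteq> {of_int k * y0 + c * l | k l. l \<in> L}"
  proof
    fix x assume "x \<in> L"
    then obtain y where y: "y \<in> L'" "x = c2 * y" using img2 by blast
    then obtain k l where kl: "y = of_int k * z + l" "l \<in> L0" using L'iff by blast
    have "x = of_int k * y0 + c * (c1 * l)" unfolding y(2) kl(1) y0_def cc1[symmetric] by (simp add: algebra_simps)
    moreover have "c1 * l \<in> L" using kl(2) L0iff by simp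
    ultimately show "x \<in> {of_int k * y0 + c * l | k l. l \<in> L}" by blast
  qed
  show ?thesis
  proof (cases "Im c = 0")
    case True
    have "c = 1 \<or> c = -1" by (rule prim_real[OF cR True c0 y0L sub])
    hence "c2 = c1 \<or> c2 = - c1" using cc1 by auto
    hence "c1 * z \<in> L \<or> - (c1 * z) \<in> L" using y0L unfolding y0_def by auto
    hence "c1 * z \<in> L" using Lneg[of "- (c1 * z)"] by auto
    hence zL0: "z \<in> L0" using L0iff by simp
    have "m = 1"
    proof (rule ccontr)
      assume "m \<noteq> 1" hence "0 < (1::nat) \<and> 1 < m" using m0 by simp
      hence "of_nat 1 * z \<notin> L0" using nz by blast
      thus False using zL0 by simp
    qed
    hence "\<forall>L' f'. ns_structure N eps L' f' \<longrightarrow> hecke_corr N eps m L' f' L' f'" using hecke_m1 by blast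
    thus ?thesis using h6 by blast
  next
    case False
    show ?thesis by (rule core_nonreal[OF N nq m0 mN te sq cR False comm mc y0L sub])
  qed
qed

theorem lemma4p9:
  fixes N m :: nat and eps :: int and L :: "complex set" and f :: "complex \<Rightarrow> complex"
  assumes "prime N"
    and "\<not> QuadRes (int N) eps"
    and "0 < m" and "coprime m N" and "real m < real N ^ 2 / 4"
    and "\<not> (\<forall>L' f'. ns_structure N eps L' f' \<longrightarrow> hecke_corr N eps m L' f' L' f')"
    and "ns_structure N eps L f"
    and "hecke_corr N eps m L f L f"
  shows "heegner N L f"
proof -
  obtain w1 w2 where nd: "Im (w2/w1) \<noteq> 0" and L: "L = lattice_gen w1 w2"
    using assms(7) unfolding ns_structure_def is_lattice_def by blast
  have lt: "lat w1 w2" using nd by unfold_locales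
  show ?thesis using main_lat[OF lt assms(1,2,3,5,6)] assms(7,8) unfolding L by blast
qed



end
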